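(* Let $B_\infty$ be the one-sided infinite word which is the limit of the building blocks $B_n$ of a rank-one construction. If $B_\infty$ is periodic, then the rank-one transformation $T$ constructed by cutting and stacking from the same parameters is measure-theoretically isomorphic to an odometer; in particular it has infinitely many eigenvalues which are roots of unity.
   Context: Rank-one parameters: integers $p_n\ge2$, integers $s_{n,i}\ge0$ ($0\le i\le p_n-1$), $h_1=1$, $h_{n+1}=p_nh_n+\sum_is_{n,i}$, $\sum_n\frac1{h_{n+1}}\sum_is_{n,i}<\infty$; the rank-one transformation is obtained by cutting and stacking (at stage $n$ the tower of height $h_n$ is cut into $p_n$ equal columns, $s_{n,i}$ spacers are put above column $i$, and column $i+1$ is stacked on column $i$). Building blocks: $B_1=0$, $B_{n+1}=B_n1^{s_{n,0}}\cdots B_n1^{s_{n,p_n-1}}$; since $B_n$ is a prefix of $B_{n+1}$, $B_\infty=\lim B_n$ is a well-defined infinite word $x_0x_1x_2\cdots$; periodic means there is $P\ge1$ with $x_{i+P}=x_i$ for all $i\ge0$. An odometer is addition of $(1,0,0,\dots)$ with carry on $\prod_n\{0,\dots,r_n-1\}$ with product uniform measure. *)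

theory Defs
  imports "HOL-Probability.Probability"
begin

(* Rank-one parameters, indexed from stage 0 (paper's stage n+1 = our stage n):
   p n = number of columns at stage n, s n i = spacers above column i (i < p n). *)

fun rk_height :: "(nat \<Rightarrow> nat) \<Rightarrow> (nat \<Rightarrow> nat \<Rightarrow> nat) \<Rightarrow> nat \<Rightarrow> nat" where
  "rk_height p s 0 = 1"
| "rk_height p s (Suc n) = p n * rk_height p s n + (\<Sum>i<p n. s n i)"

fun rk_block :: "(nat \<Rightarrow> nat) \<Rightarrow> (nat \<Rightarrow> nat \<Rightarrow> nat) \<Rightarrow> nat \<Rightarrow> nat list" where
  "rk_block p s 0 = [0]"
| "rk_block p s (Suc n) =
     concat (map (\<lambda>i. rk_block p s n @ replicate (s n i) 1) [0..<p n])"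

(* the limit word B_infinity: since each B n is a prefix of B (n+1) and (for p n >= 2)
   length (B n) >= 2^n > n, the i-th letter of B_infinity is the i-th letter of B i *)
definition rk_word :: "(nat \<Rightarrow> nat) \<Rightarrow> (nat \<Rightarrow> nat \<Rightarrow> nat) \<Rightarrow> nat \<Rightarrow> nat" where
  "rk_word p s i = rk_block p s i ! i"

definition periodic_word :: "(nat \<Rightarrow> 'a) \<Rightarrow> bool" where
  "periodic_word x \<longleftrightarrow> (\<exists>P\<ge>1. \<forall>i. x (i + P) = x i)"

(* Cutting and stacking, realised on the real line.  Stage n: a list of left endpoints of
   the levels (bottom to top, length h n) and the common width of the levels.
   Stage 0: the single level [0,1).  Stage n+1: each level is cut into p n pieces of width
   w/p n; column i consists of the i-th pieces, followed by s n i new spacer intervals taken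
   consecutively to the right of everything used so far; column i+1 is stacked on column i. *)
fun rk_tower :: "(nat \<Rightarrow> nat) \<Rightarrow> (nat \<Rightarrow> nat \<Rightarrow> nat) \<Rightarrow> nat \<Rightarrow> real list \<times> real" where
  "rk_tower p s 0 = ([0], 1)"
| "rk_tower p s (Suc n) =
     (let L = fst (rk_tower p s n); w = snd (rk_tower p s n);
          w' = w / real (p n); top = real (length L) * w
      in (concat (map (\<lambda>i. map (\<lambda>a. a + real i * w') L @
                            map (\<lambda>t. top + real ((\<Sum>k<i. s n k) + t) * w') [0..<s n i])
                      [0..<p n]), w'))"

definition rk_level :: "(nat \<Rightarrow> nat) \<Rightarrow> (nat \<Rightarrow> nat \<Rightarrow> nat) \<Rightarrow> nat \<Rightarrow> nat \<Rightarrow> real set" where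
  "rk_level p s n j = {fst (rk_tower p s n) ! j ..< fst (rk_tower p s n) ! j + snd (rk_tower p s n)}"

definition rk_space :: "(nat \<Rightarrow> nat) \<Rightarrow> (nat \<Rightarrow> nat \<Rightarrow> nat) \<Rightarrow> real set" where
  "rk_space p s = (\<Union>n. \<Union>j\<in>{..<length (fst (rk_tower p s n))}. rk_level p s n j)"

(* the transformation: a point in a non-top level j of some tower is translated onto level j+1;
   (the measure-zero set of remaining points is left fixed) *)
definition rk_map :: "(nat \<Rightarrow> nat) \<Rightarrow> (nat \<Rightarrow> nat \<Rightarrow> nat) \<Rightarrow> real \<Rightarrow> real" where
  "rk_map p s x =
     (if \<exists>n j. Suc j < length (fst (rk_tower p s n)) \<and> x \<in> rk_level p s n j
      then (SOME y. \<exists>n j. Suc j < length (fst (rk_tower p s n)) \<and> x \<in> rk_level p s n j \<and>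
               y = x - fst (rk_tower p s n) ! j + fst (rk_tower p s n) ! Suc j)
      else x)"

definition rk_measure :: "(nat \<Rightarrow> nat) \<Rightarrow> (nat \<Rightarrow> nat \<Rightarrow> nat) \<Rightarrow> real measure" where
  "rk_measure p s = uniform_measure lborel (rk_space p s)"

definition odometer_map :: "(nat \<Rightarrow> nat) \<Rightarrow> (nat \<Rightarrow> nat) \<Rightarrow> (nat \<Rightarrow> nat)" where
  "odometer_map r x =
     (if \<exists>k. Suc (x k) < r k
      then (let k = (LEAST k. Suc (x k) < r k)
            in (\<lambda>j. if j < k then 0 else if j = k then Suc (x k) else x j))
      else (\<lambda>j. 0))"

definition odometer_measure :: "(nat \<Rightarrow> nat) \<Rightarrow> (nat \<Rightarrow> nat) measure" where
  "odometer_measure r = (\<Pi>\<^sub>M n\<in>UNIV. uniform_count_measure {0..<r n})"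

definition mp_isomorphic :: "'a measure \<Rightarrow> ('a \<Rightarrow> 'a) \<Rightarrow> 'b measure \<Rightarrow> ('b \<Rightarrow> 'b) \<Rightarrow> bool" where
  "mp_isomorphic M T N S \<longleftrightarrow>
     (\<exists>A B \<phi> \<psi>. A \<in> sets M \<and> B \<in> sets N \<and>
        emeasure M (space M - A) = 0 \<and> emeasure N (space N - B) = 0 \<and>
        \<phi> \<in> measurable M N \<and> \<psi> \<in> measurable N M \<and> distr M N \<phi> = N \<and>
        (\<forall>x\<in>A. T x \<in> A \<and> \<phi> x \<in> B \<and> \<psi> (\<phi> x) = x \<and> \<phi> (T x) = S (\<phi> x)) \<and>
        (\<forall>y\<in>B. S y \<in> B \<and> \<psi> y \<in> A \<and> \<phi> (\<psi> y) = y))"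

definition mp_eigenvalue :: "'a measure \<Rightarrow> ('a \<Rightarrow> 'a) \<Rightarrow> complex \<Rightarrow> bool" where
  "mp_eigenvalue M T c \<longleftrightarrow>
     (\<exists>f. f \<in> borel_measurable M \<and> (AE x in M. f (T x) = c * f x) \<and> \<not> (AE x in M. f x = 0))"

end

theory Submission
  imports Defs
begin
lemma length_concat_map_upt:
  "length (concat (map f [0..<m])) = (\<Sum>k<m. length (f k))"
  by (induction m) auto

lemma nth_concat_map_upt:
  assumes "i < m" "j < length (f i)"
  shows "concat (map f [0..<m]) ! ((\<Sum>k<i. length (f k)) + j) = f i ! j"
  using assms
proof (induction m)
  case 0 then show ?case by simp
next
  case (Suc m)
  show ?case
  proof (cases "i < m")
    case True
    have "(\<Sum>k<i. length (f k)) + j < (\<Sum>k<m. length (f k))"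
    proof -
      have "(\<Sum>k<Suc i. length (f k)) \<le> (\<Sum>k<m. length (f k))"
        using True by (intro sum_mono2) auto
      then show ?thesis using Suc.prems by simp
    qed
    then show ?thesis using Suc True by (simp add: nth_append length_concat_map_upt)
  next
    case False
    then have "i = m" using Suc.prems by simp
    then show ?thesis using Suc.prems by (simp add: nth_append length_concat_map_upt)
  qed
qed

lemma distinct_concat_map_upt:
  assumes "\<And>i. i < m \<Longrightarrow> distinct (f i)"
    and "\<And>i j. i < j \<Longrightarrow> j < m \<Longrightarrow> set (f i) \<inter> set (f j) = {}"
  shows "distinct (concat (map f [0..<m]))"
  using assms
proof (induction m)
  case 0 then show ?case by simp
next
  case (Suc m)
  have "distinct (concat (map f [0..<m]))" using Suc by auto
  moreover have "set (concat (map f [0..<m])) \<inter> set (f m) = {}"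
  proof -
    have *: "\<And>a. a < m \<Longrightarrow> set (f a) \<inter> set (f m) = {}" using Suc.prems(2) by auto
    show ?thesis
    proof (rule equals0I)
      fix x assume "x \<in> set (concat (map f [0..<m])) \<inter> set (f m)"
      then obtain a where "a < m" "x \<in> set (f a)" "x \<in> set (f m)" by auto
      then show False using * by blast
    qed
  qed
  ultimately show ?case using Suc.prems(1) by simp
qed

locale rk1 =
  fixes p :: "nat \<Rightarrow> nat" and s :: "nat \<Rightarrow> nat \<Rightarrow> nat"
  assumes p2: "\<And>n. 2 \<le> p n"
begin

abbreviation "H \<equiv> rk_height p s"
definition "LL n = fst (rk_tower p s n)"
definition "W n = snd (rk_tower p s n)"

primrec code :: "nat \<Rightarrow> nat list" where
  "code 0 = [0]"
| "code (Suc n) = concat (map (\<lambda>i. map (\<lambda>c. c * p n + i) (code n) @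
      map (\<lambda>t. H n * p n + (\<Sum>k<i. s n k) + t) [0..<s n i]) [0..<p n])"

definition off :: "nat \<Rightarrow> nat \<Rightarrow> nat" where "off n i = (\<Sum>k<i. H n + s n k)"

lemma p_pos: "0 < p n" using p2[of n] by simp

lemma len_code: "length (code n) = H n"
  by (induction n) (simp_all add: length_concat_map_upt sum.distrib)

lemma off_Suc: "off n (Suc i) = off n i + H n + s n i"
  by (simp add: off_def)

lemma off_p: "off n (p n) = H (Suc n)"
  by (simp add: off_def sum.distrib)

lemma off_mono: "i \<le> j \<Longrightarrow> off n i \<le> off n j"
  unfolding off_def by (intro sum_mono2) auto

lemma off_le: "i < p n \<Longrightarrow> off n i + H n + s n i \<le> H (Suc n)"
  using off_mono[of "Suc i" "p n" n] by (simp add: off_Suc off_p)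

lemma code_nth:
  assumes "i < p n" "j < H n"
  shows "code (Suc n) ! (off n i + j) = code n ! j * p n + i"
proof -
  have "code (Suc n) ! (off n i + j) =
    (map (\<lambda>c. c * p n + i) (code n) @ map (\<lambda>t. H n * p n + (\<Sum>k<i. s n k) + t) [0..<s n i]) ! j"
    unfolding code.simps off_def
    using nth_concat_map_upt[OF assms(1), of j "\<lambda>i. map (\<lambda>c. c * p n + i) (code n) @
      map (\<lambda>t. H n * p n + (\<Sum>k<i. s n k) + t) [0..<s n i]"] assms
    by (simp add: len_code)
  then show ?thesis using assms by (simp add: nth_append len_code)
qed

lemma H_Suc: "H (Suc n) = p n * H n + (\<Sum>i<p n. s n i)" by simp

lemma H_pos: "0 < H n"
  by (induction n) (use p_pos in auto)

lemma H_Suc_ge: "2 * H n \<le> H (Suc n)"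
proof -
  have "2 * H n \<le> p n * H n" using mult_le_mono1[OF p2[of n]] by simp
  then show ?thesis unfolding H_Suc by linarith
qed

lemma H_mono: "n \<le> m \<Longrightarrow> H n \<le> H m"
proof (induction m)
  case 0 then show ?case by simp
next
  case (Suc m) then show ?case using H_Suc_ge[of m] by (cases "n = Suc m") auto
qed

lemma H_gt: "n < H n"
proof (induction n)
  case 0 then show ?case by simp
next
  case (Suc n) then show ?case using H_Suc_ge[of n] by simp
qed

lemma code_props: "distinct (code n) \<and> set (code n) \<subseteq> {..<H n}"
proof (induction n)
  case 0 then show ?case by simp
next
  case (Suc n)
  have D: "distinct (code n)" and S: "set (code n) \<subseteq> {..<H n}" using Suc by auto
  define f where "f i = map (\<lambda>c. c * p n + i) (code n) @
      map (\<lambda>t. H n * p n + (\<Sum>k<i. s n k) + t) [0..<s n i]" for i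
  have P: "0 < p n" by (rule p_pos)
  have lt1: "c * p n + i < H n * p n" if "c < H n" "i < p n" for c i
  proof -
    have "c * p n + i < c * p n + p n" using that by simp
    also have "\<dots> = (c + 1) * p n" by simp
    also have "\<dots> \<le> H n * p n" using that by (intro mult_right_mono) auto
    finally show ?thesis .
  qed
  have sum_lt: "(\<Sum>k<i. s n k) + t < (\<Sum>k<j. s n k)" if "i < j" "t < s n i" for i j t
  proof -
    have "(\<Sum>k<Suc i. s n k) \<le> (\<Sum>k<j. s n k)" using that by (intro sum_mono2) auto
    then show ?thesis using that by simp
  qed
  have "distinct (concat (map f [0..<p n]))"
  proof (rule distinct_concat_map_upt)
    fix i assume i: "i < p n"
    have "inj_on (\<lambda>c. c * p n + i) (set (code n))" using P by (auto simp: inj_on_def)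
    then have "distinct (map (\<lambda>c. c * p n + i) (code n))" using D by (simp add: distinct_map)
    moreover have "distinct (map (\<lambda>t. H n * p n + (\<Sum>k<i. s n k) + t) [0..<s n i])"
      by (simp add: distinct_map inj_on_def)
    moreover have "set (map (\<lambda>c. c * p n + i) (code n)) \<inter>
        set (map (\<lambda>t. H n * p n + (\<Sum>k<i. s n k) + t) [0..<s n i]) = {}"
      using lt1 S i by fastforce
    ultimately show "distinct (f i)" by (simp add: f_def)
  next
    fix i j assume ij: "i < j" "j < p n"
    have a: "c * p n + i \<noteq> c' * p n + j" for c c'
    proof
      assume "c * p n + i = c' * p n + j"
      then have "(c * p n + i) mod p n = (c' * p n + j) mod p n" by simp
      then show False using ij by simp
    qed
    have b: "(\<Sum>k<i. s n k) + s n i \<le> (\<Sum>k<j. s n k)"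
    proof -
      have "(\<Sum>k<Suc i. s n k) \<le> (\<Sum>k<j. s n k)" using ij by (intro sum_mono2) auto
      then show ?thesis by simp
    qed
    show "set (f i) \<inter> set (f j) = {}"
    proof (rule ccontr)
      assume "set (f i) \<inter> set (f j) \<noteq> {}"
      then obtain x where x1: "x \<in> set (f i)" and x2: "x \<in> set (f j)" by blast
      have ji: "i < p n" using ij by simp
      from x1 consider (A) c where "c \<in> set (code n)" "x = c * p n + i"
        | (B) "H n * p n + (\<Sum>k<i. s n k) \<le> x" "x < H n * p n + (\<Sum>k<i. s n k) + s n i"
        unfolding f_def by auto
      then show False
      proof cases
        case A
        have "x < H n * p n" using A S lt1[OF _ ji] by auto
        from x2 consider (A') c' where "c' \<in> set (code n)" "x = c' * p n + j"
          | (B') "H n * p n + (\<Sum>k<j. s n k) \<le> x"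
          unfolding f_def by auto
        then show False
        proof cases
          case A' then show False using A a by metis
        next
          case B' then show False using \<open>x < H n * p n\<close> by simp
        qed
      next
        case B
        from x2 consider (A') c' where "c' \<in> set (code n)" "x = c' * p n + j"
          | (B') "H n * p n + (\<Sum>k<j. s n k) \<le> x"
          unfolding f_def by auto
        then show False
        proof cases
          case A'
          have "x < H n * p n" using A' S lt1[OF _ ij(2)] by auto
          then show False using B by simp
        next
          case B' then show False using B b by simp
        qed
      qed
    qed
  qed
  moreover have "set (concat (map f [0..<p n])) \<subseteq> {..<H (Suc n)}"
  proof
    fix x assume "x \<in> set (concat (map f [0..<p n]))"
    then obtain i where i: "i < p n" "x \<in> set (f i)" by auto
    show "x \<in> {..<H (Suc n)}"
    proof (cases "x \<in> set (map (\<lambda>c. c * p n + i) (code n))")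
      case True
      then obtain c where "c < H n" "x = c * p n + i" using S by auto
      then show ?thesis using lt1[of c i] i by (auto simp: mult.commute)
    next
      case False
      then have t: "x < H n * p n + (\<Sum>k<i. s n k) + s n i"
        using i by (auto simp: f_def)
      have "(\<Sum>k<Suc i. s n k) \<le> (\<Sum>k<p n. s n k)" using i by (intro sum_mono2) auto
      then show ?thesis using t by (simp add: mult.commute)
    qed
  qed
  moreover have cs: "code (Suc n) = concat (map f [0..<p n])" unfolding f_def[abs_def] by simp
  ultimately show ?case by simp
qed

lemma code_distinct: "distinct (code n)" using code_props by blast

lemma code_set: "set (code n) = {..<H n}"
proof -
  have "set (code n) \<subseteq> {..<H n}" using code_props by blast
  moreover have "card (set (code n)) = H n"
    using code_distinct distinct_card len_code by metis
  ultimately show ?thesis by (simp add: card_subset_eq)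
qed

lemma code_lt: "j < H n \<Longrightarrow> code n ! j < H n"
  using code_set len_code by (metis lessThan_iff nth_mem)

lemma code_inj: "j1 < H n \<Longrightarrow> j2 < H n \<Longrightarrow> code n ! j1 = code n ! j2 \<Longrightarrow> j1 = j2"
  using code_distinct len_code by (metis nth_eq_iff_index_eq)

lemma code_surj: "c < H n \<Longrightarrow> \<exists>j<H n. code n ! j = c"
  using code_set len_code by (metis in_set_conv_nth lessThan_iff)

lemma tower_Suc: "rk_tower p s (Suc n) =
     (let L = LL n; w = W n; w' = w / real (p n); top = real (length L) * w
      in (concat (map (\<lambda>i. map (\<lambda>a. a + real i * w') L @
                            map (\<lambda>t. top + real ((\<Sum>k<i. s n k) + t) * w') [0..<s n i])
                      [0..<p n]), w'))"
  unfolding LL_def W_def by (simp only: rk_tower.simps)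

lemma W_0: "W 0 = 1" by (simp add: W_def)
lemma W_Suc: "W (Suc n) = W n / real (p n)" by (simp add: tower_Suc Let_def W_def)

lemma W_pos: "0 < W n"
  by (induction n) (simp_all add: W_0 W_Suc p_pos)

lemma W_le: "W n \<le> (1/2)^n"
proof (induction n)
  case 0 then show ?case by (simp add: W_0)
next
  case (Suc n)
  have "W (Suc n) = W n / real (p n)" by (rule W_Suc)
  also have "\<dots> \<le> W n / 2"
    using p2[of n] W_pos[of n] by (intro divide_left_mono) auto
  also have "\<dots> \<le> (1/2)^Suc n" using Suc by simp
  finally show ?case .
qed

lemma LL_eq: "LL n = map (\<lambda>c. real c * W n) (code n)"
proof (induction n)
  case 0 then show ?case by (simp add: LL_def W_def)
next
  case (Suc n)
  have P: "real (p n) \<noteq> 0" using p_pos[of n] by simp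
  have "LL (Suc n) = concat (map (\<lambda>i. map (\<lambda>a. a + real i * (W n / real (p n))) (LL n) @
                            map (\<lambda>t. real (length (LL n)) * W n + real ((\<Sum>k<i. s n k) + t) * (W n / real (p n))) [0..<s n i])
                      [0..<p n])"
    unfolding LL_def[of "Suc n"] tower_Suc Let_def by simp
  also have "\<dots> = map (\<lambda>c. real c * W (Suc n)) (code (Suc n))"
    unfolding code.simps map_concat W_Suc Suc.IH
    by (intro arg_cong[where f=concat] map_cong refl)
       (simp add: len_code field_simps P)
  finally show ?case .
qed

lemma LL_nth: "j < H n \<Longrightarrow> LL n ! j = real (code n ! j) * W n"
  by (simp add: LL_eq len_code)

lemma len_LL: "length (LL n) = H n" by (simp add: LL_eq len_code)

lemma level_eq: "j < H n \<Longrightarrow> rk_level p s n j = {real (code n ! j) * W n ..< real (code n ! j) * W n + W n}"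
  unfolding rk_level_def LL_def[symmetric] W_def[symmetric] using LL_nth by simp

end

context rk1 begin

abbreviation "lv \<equiv> rk_level p s"

lemma in_level: "j < H n \<Longrightarrow> x \<in> lv n j \<longleftrightarrow>
   real (code n ! j) * W n \<le> x \<and> x < real (code n ! j) * W n + W n"
  by (simp add: level_eq)

lemma level_unique:
  assumes "j1 < H n" "j2 < H n" "x \<in> lv n j1" "x \<in> lv n j2"
  shows "j1 = j2"
proof -
  let ?c1 = "code n ! j1" and ?c2 = "code n ! j2"
  have W: "0 < W n" by (rule W_pos)
  have a: "real ?c1 * W n \<le> x" "x < real ?c1 * W n + W n"
    using assms in_level by blast+
  have b: "real ?c2 * W n \<le> x" "x < real ?c2 * W n + W n"
    using assms in_level by blast+
  have "\<not> ?c1 < ?c2"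
  proof
    assume "?c1 < ?c2"
    then have "real ?c1 + 1 \<le> real ?c2" by linarith
    then have "(real ?c1 + 1) * W n \<le> real ?c2 * W n" using W by (intro mult_right_mono) auto
    then show False using a b by (simp add: algebra_simps)
  qed
  moreover have "\<not> ?c2 < ?c1"
  proof
    assume "?c2 < ?c1"
    then have "real ?c2 + 1 \<le> real ?c1" by linarith
    then have "(real ?c2 + 1) * W n \<le> real ?c1 * W n" using W by (intro mult_right_mono) auto
    then show False using a b by (simp add: algebra_simps)
  qed
  ultimately have "?c1 = ?c2" by simp
  then show ?thesis using code_inj assms by blast
qed

lemma level_sub_tower:
  assumes "j < H n" "x \<in> lv n j"
  shows "0 \<le> x \<and> x < real (H n) * W n"
proof -
  have "code n ! j < H n" using code_lt assms by blast
  then have "real (code n ! j) + 1 \<le> real (H n)" by linarith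
  then have "(real (code n ! j) + 1) * W n \<le> real (H n) * W n" using W_pos[of n] by (intro mult_right_mono) auto
  moreover have "0 \<le> real (code n ! j) * W n" using W_pos[of n] by simp
  moreover have "real (code n ! j) * W n \<le> x" "x < real (code n ! j) * W n + W n"
    using assms in_level by blast+
  moreover have "(real (code n ! j) + 1) * W n = real (code n ! j) * W n + W n" by (simp add: distrib_right)
  ultimately show ?thesis by linarith
qed

lemma tower_level:
  assumes "0 \<le> x" "x < real (H n) * W n"
  shows "\<exists>j<H n. x \<in> lv n j"
proof -
  have W: "0 < W n" by (rule W_pos)
  define c where "c = nat \<lfloor>x / W n\<rfloor>"
  have "0 \<le> x / W n" using assms W by simp
  then have c1: "real c \<le> x / W n" and c2: "x / W n < real c + 1"
    unfolding c_def by linarith+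
  have "x / W n < real (H n)" using assms W by (simp add: divide_less_eq)
  then have "c < H n" using c1 by linarith
  then obtain j where j: "j < H n" "code n ! j = c" using code_surj by blast
  have "real c * W n \<le> x" using c1 W by (simp add: le_divide_eq)
  moreover have "x < real c * W n + W n" using c2 W by (simp add: divide_less_eq algebra_simps)
  ultimately show ?thesis using j in_level by blast
qed

lemma off_j_lt: "i < p n \<Longrightarrow> j < H n \<Longrightarrow> off n i + j < H (Suc n)"
  using off_le[of i n] by simp

lemma level_split:
  assumes "j < H n" "x \<in> lv n j"
  shows "\<exists>i<p n. x \<in> lv (Suc n) (off n i + j)"
proof -
  let ?c = "code n ! j" and ?w = "W (Suc n)"
  have w: "0 < ?w" by (rule W_pos)
  have P: "0 < real (p n)" using p_pos by simp
  have Wn: "W n = real (p n) * ?w" using P by (simp add: W_Suc)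
  have a: "real ?c * W n \<le> x" "x < real ?c * W n + W n" using assms in_level by blast+
  define q where "q = nat \<lfloor>x / ?w\<rfloor>"
  have x0: "0 \<le> x" using level_sub_tower assms by blast
  then have "0 \<le> x / ?w" using w by simp
  then have q1: "real q \<le> x / ?w" and q2: "x / ?w < real q + 1" unfolding q_def by linarith+
  have "real (?c * p n) \<le> x / ?w" using a(1) w by (simp add: le_divide_eq Wn algebra_simps)
  then have "?c * p n \<le> q" using q2 by linarith
  have "x / ?w < real (?c * p n + p n)" using a(2) w by (simp add: divide_less_eq Wn algebra_simps)
  then have "q < ?c * p n + p n" using q1 by linarith
  define i where "i = q - ?c * p n"
  have i: "i < p n" "q = ?c * p n + i" using \<open>?c * p n \<le> q\<close> \<open>q < ?c * p n + p n\<close> unfolding i_def by auto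
  have J: "off n i + j < H (Suc n)" using off_j_lt i assms by blast
  have cc: "code (Suc n) ! (off n i + j) = q" using code_nth[OF i(1) assms(1)] i by simp
  have "real q * ?w \<le> x" using q1 w by (simp add: le_divide_eq)
  moreover have "x < real q * ?w + ?w" using q2 w by (simp add: divide_less_eq algebra_simps)
  ultimately have "x \<in> lv (Suc n) (off n i + j)" using in_level[OF J] cc by simp
  then show ?thesis using i by blast
qed

definition transl :: "nat \<Rightarrow> nat \<Rightarrow> real" where
  "transl n j = LL n ! Suc j - LL n ! j"

lemma transl_eq: "Suc j < H n \<Longrightarrow> transl n j = (real (code n ! Suc j) - real (code n ! j)) * W n"
  by (simp add: transl_def LL_nth algebra_simps)

lemma transl_step:
  assumes "x \<in> lv n j" "Suc j < H n"
  shows "\<exists>J. x \<in> lv (Suc n) J \<and> Suc J < H (Suc n) \<and> transl (Suc n) J = transl n j"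
proof -
  obtain i where i: "i < p n" "x \<in> lv (Suc n) (off n i + j)"
    using level_split[OF Suc_lessD[OF assms(2)] assms(1)] by blast
  have J: "Suc (off n i + j) < H (Suc n)" using off_j_lt[OF i(1) assms(2)] by simp
  have P: "real (p n) \<noteq> 0" using p_pos[of n] by simp
  have "transl (Suc n) (off n i + j) =
     (real (code (Suc n) ! (off n i + Suc j)) - real (code (Suc n) ! (off n i + j))) * W (Suc n)"
    using transl_eq[OF J] by simp
  also have "\<dots> = (real (code n ! Suc j * p n + i) - real (code n ! j * p n + i)) * (W n / real (p n))"
  proof -
    have c1: "code (Suc n) ! Suc (off n i + j) = code n ! Suc j * p n + i"
      using code_nth[OF i(1) assms(2)] by simp
    have c2: "code (Suc n) ! (off n i + j) = code n ! j * p n + i"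
      using code_nth[OF i(1) Suc_lessD[OF assms(2)]] by simp
    show ?thesis by (simp del: code.simps add: c1 c2 W_Suc)
  qed
  also have "\<dots> = (real (code n ! Suc j) - real (code n ! j)) * W n" using P by (simp add: field_simps)
  also have "\<dots> = transl n j" using transl_eq[OF assms(2)] by simp
  finally show ?thesis using i J by blast
qed

lemma transl_steps:
  assumes "x \<in> lv n j" "Suc j < H n" "n \<le> m"
  shows "\<exists>J. x \<in> lv m J \<and> Suc J < H m \<and> transl m J = transl n j"
  using assms(3)
proof (induction m)
  case 0 then show ?case using assms by auto
next
  case (Suc m)
  show ?case
  proof (cases "n = Suc m")
    case True then show ?thesis using assms by auto
  next
    case False
    then obtain J where "x \<in> lv m J" "Suc J < H m" "transl m J = transl n j" using Suc by auto
    then show ?thesis using transl_step by metis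
  qed
qed

lemma rk_map_eq:
  assumes "x \<in> lv n j" "Suc j < H n"
  shows "rk_map p s x = x + transl n j"
proof -
  have len: "length (fst (rk_tower p s m)) = H m" for m using len_LL by (simp add: LL_def)
  have ex: "\<exists>n j. Suc j < length (fst (rk_tower p s n)) \<and> x \<in> lv n j" using assms len by metis
  define Q where "Q y = (\<exists>n' j'. Suc j' < length (fst (rk_tower p s n')) \<and> x \<in> lv n' j' \<and>
               y = x - fst (rk_tower p s n') ! j' + fst (rk_tower p s n') ! Suc j')" for y
  have allQ: "Q y \<Longrightarrow> y = x + transl n j" for y
  proof -
    assume "Q y"
    then obtain n' j' where nj: "Suc j' < H n'" "x \<in> lv n' j'" "y = x + transl n' j'"
      unfolding Q_def using len by (auto simp: transl_def LL_def)
    define m where "m = max n n'"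
    obtain J1 where J1: "x \<in> lv m J1" "Suc J1 < H m" "transl m J1 = transl n j"
      using transl_steps[OF assms, of m] m_def by auto
    obtain J2 where J2: "x \<in> lv m J2" "Suc J2 < H m" "transl m J2 = transl n' j'"
      using transl_steps[OF nj(2) nj(1), of m] m_def by auto
    have "J1 = J2" using level_unique J1 J2 by (meson Suc_lessD)
    then show "y = x + transl n j" using J1 J2 nj by simp
  qed
  have exQ: "\<exists>y. Q y" using ex unfolding Q_def by blast
  have "Q (SOME y. Q y)" by (rule someI_ex[OF exQ])
  then have "(SOME y. Q y) = x + transl n j" by (rule allQ)
  then show ?thesis unfolding rk_map_def Q_def by (simp only: if_P[OF ex])
qed

lemma rk_map_level:
  assumes "x \<in> lv n j" "Suc j < H n"
  shows "rk_map p s x \<in> lv n (Suc j)"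
proof -
  have a: "real (code n ! j) * W n \<le> x" "x < real (code n ! j) * W n + W n"
    using assms in_level[of j n x] by auto
  have "rk_map p s x = x - real (code n ! j) * W n + real (code n ! Suc j) * W n"
    using rk_map_eq[OF assms] transl_eq[OF assms(2)] by (simp add: left_diff_distrib)
  then show ?thesis using a in_level[OF assms(2)] by simp
qed

definition rend :: "nat \<Rightarrow> nat \<Rightarrow> real" where
  "rend n j = real (code n ! j) * W n + W n"

lemma rend_last:
  assumes "j < H n"
  shows "rend (Suc n) (off n (p n - 1) + j) = rend n j"
proof -
  have P: "p n - 1 < p n" "real (p n) \<noteq> 0" using p_pos[of n] by auto
  have "rend (Suc n) (off n (p n - 1) + j) = real (code n ! j * p n + (p n - 1)) * (W n / p n) + W n / p n"
    unfolding rend_def using code_nth[OF P(1) assms] by (simp add: W_Suc)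
  also have "\<dots> = (real (code n ! j) * real (p n) + real (p n)) * (W n / p n)"
    using p_pos[of n] by (simp add: of_nat_diff algebra_simps)
  also have "\<dots> = rend n j" unfolding rend_def using P by (simp add: field_simps)
  finally show ?thesis .
qed

lemma W_small: "0 < e \<Longrightarrow> \<exists>m\<ge>m0. W m < e"
proof -
  assume e: "0 < e"
  obtain k where k: "(1/2::real)^k < e" using real_arch_pow_inv[OF e, of "1/2"] by auto
  define m where "m = max m0 k"
  have "W m \<le> (1/2)^m" by (rule W_le)
  also have "\<dots> \<le> (1/2)^k" unfolding m_def by (intro power_decreasing) auto
  finally show ?thesis using k m_def by (intro exI[of _ m]) auto
qed

lemma rend_const_False:
  assumes "\<And>m. m0 \<le> m \<Longrightarrow> J m < H m \<and> x \<in> lv m (J m)"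
    and "\<And>m. m0 \<le> m \<Longrightarrow> rend (Suc m) (J (Suc m)) = rend m (J m)"
  shows False
proof -
  have c: "m0 \<le> m \<Longrightarrow> rend m (J m) = rend m0 (J m0)" for m
  proof (induction m)
    case 0 then show ?case by simp
  next
    case (Suc m) then show ?case using assms(2)[of m] by (cases "m0 = Suc m") auto
  qed
  have "x < rend m0 (J m0)" using assms(1)[of m0] in_level rend_def by auto
  then obtain m where m: "m0 \<le> m" "W m < rend m0 (J m0) - x" using W_small[of "rend m0 (J m0) - x" m0] by auto
  have "real (code m ! J m) * W m \<le> x" using assms(1)[OF m(1)] in_level by blast
  then show False using m c[OF m(1)] unfolding rend_def by simp
qed

end

lemma dvd_eq_small:
  fixes P h a b :: nat
  assumes "P dvd h + a" "P dvd h + b" "a < P" "b < P"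
  shows "a = b"
proof (cases "a \<le> b")
  case True
  have "P dvd (h + b) - (h + a)" using assms by (intro dvd_diff_nat)
  then have "P dvd b - a" by simp
  moreover have "b - a < P" using assms by simp
  ultimately have "b - a = 0" using dvd_imp_le by fastforce
  then show ?thesis using True by simp
next
  case False
  have "P dvd (h + a) - (h + b)" using assms by (intro dvd_diff_nat)
  then have "P dvd a - b" by simp
  moreover have "a - b < P" using assms by simp
  ultimately have "a - b = 0" using dvd_imp_le by fastforce
  then show ?thesis using False by simp
qed

locale rk2 = rk1 +
  assumes per: "periodic_word (rk_word p s)"
begin

abbreviation "x \<equiv> rk_word p s"
abbreviation "blk \<equiv> rk_block p s"

lemma len_blk: "length (blk n) = H n"
  by (induction n) (simp_all add: length_concat_map_upt sum.distrib)

lemma blk_nth: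
  assumes "i < p n" "t < H n + s n i"
  shows "blk (Suc n) ! (off n i + t) = (blk n @ replicate (s n i) 1) ! t"
  unfolding rk_block.simps off_def
  using nth_concat_map_upt[OF assms(1), of t "\<lambda>i. blk n @ replicate (s n i) 1"] assms
  by (simp add: len_blk)

lemma blk_nth1: "i < p n \<Longrightarrow> t < H n \<Longrightarrow> blk (Suc n) ! (off n i + t) = blk n ! t"
  using blk_nth[of i n t] by (simp add: nth_append len_blk)

lemma blk_nth2: "i < p n \<Longrightarrow> t < s n i \<Longrightarrow> blk (Suc n) ! (off n i + H n + t) = 1"
  using blk_nth[of i n "H n + t"] by (simp add: nth_append len_blk add.assoc)

lemma blk_prefix: "n \<le> m \<Longrightarrow> t < H n \<Longrightarrow> blk m ! t = blk n ! t"
proof (induction m)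
  case 0 then show ?case by simp
next
  case (Suc m)
  show ?case
  proof (cases "n = Suc m")
    case True then show ?thesis by simp
  next
    case False
    then have nm: "n \<le> m" using Suc by simp
    have "t < H m" using H_mono[OF nm] Suc by simp
    then have "blk (Suc m) ! (off m 0 + t) = blk m ! t" using blk_nth1 p_pos by blast
    then show ?thesis using Suc nm by (simp add: off_def)
  qed
qed

lemma x_eq: "t < H n \<Longrightarrow> x t = blk n ! t"
proof -
  assume t: "t < H n"
  show ?thesis
  proof (cases "n \<le> t")
    case True then show ?thesis using blk_prefix[OF True t] by (simp add: rk_word_def)
  next
    case False then show ?thesis using blk_prefix[of t n t] H_gt[of t] by (simp add: rk_word_def)
  qed
qed

lemma x0: "x 0 = 0" by (simp add: rk_word_def)

lemma x_copy: "i < p n \<Longrightarrow> t < H n \<Longrightarrow> x (off n i + t) = x t"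
proof -
  assume a: "i < p n" "t < H n"
  have "off n i + t < H (Suc n)" using off_j_lt a by blast
  then have "x (off n i + t) = blk (Suc n) ! (off n i + t)" by (rule x_eq)
  also have "\<dots> = blk n ! t" using blk_nth1 a by blast
  also have "\<dots> = x t" using x_eq a by simp
  finally show ?thesis .
qed

lemma x_spacer: "i < p n \<Longrightarrow> t < s n i \<Longrightarrow> x (off n i + H n + t) = 1"
proof -
  assume a: "i < p n" "t < s n i"
  have "off n i + H n + t < H (Suc n)" using off_le[OF a(1)] a by simp
  then have "x (off n i + H n + t) = blk (Suc n) ! (off n i + H n + t)" by (rule x_eq)
  also have "\<dots> = 1" using blk_nth2 a by blast
  finally show ?thesis .
qed

definition PP :: nat where "PP = (LEAST P. 1 \<le> P \<and> (\<forall>i. x (i + P) = x i))"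

lemma PP_props: "1 \<le> PP" "x (i + PP) = x i"
proof -
  obtain P where "1 \<le> P" "\<forall>i. x (i + P) = x i" using per unfolding periodic_word_def by blast
  then have "\<exists>P. 1 \<le> P \<and> (\<forall>i. x (i + P) = x i)" by blast
  then have "1 \<le> PP \<and> (\<forall>i. x (i + PP) = x i)" unfolding PP_def by (rule LeastI_ex)
  then show "1 \<le> PP" "x (i + PP) = x i" by auto
qed

lemma PP_min: "1 \<le> d \<Longrightarrow> d < PP \<Longrightarrow> \<exists>i. x (i + d) \<noteq> x i"
  using not_less_Least[of d "\<lambda>P. 1 \<le> P \<and> (\<forall>i. x (i + P) = x i)"] unfolding PP_def by auto

lemma x_mod: "x i = x (i mod PP)"
proof (induction i rule: less_induct)
  case (less i)
  show ?case
  proof (cases "i < PP")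
    case True then show ?thesis by simp
  next
    case False
    then obtain j where j: "i = j + PP" by (metis add.commute le_add_diff_inverse not_less)
    have "j < i" using j PP_props(1) by simp
    then have "x j = x (j mod PP)" by (rule less.IH)
    moreover have "i mod PP = j mod PP" using j by simp
    ultimately show ?thesis using j PP_props(2) by simp
  qed
qed

lemma dvd_of_shift:
  assumes "\<And>t. t < PP \<Longrightarrow> x (q + t) = x t"
  shows "PP dvd q"
proof (rule ccontr)
  assume nd: "\<not> PP dvd q"
  define d where "d = q mod PP"
  have d: "1 \<le> d" "d < PP" using nd PP_props(1) unfolding d_def by (auto simp: dvd_eq_mod_eq_0)
  have "x (t + d) = x t" for t
  proof -
    define u where "u = t mod PP"
    have u: "u < PP" using PP_props(1) unfolding u_def by simp
    have "x (t + d) = x ((t + d) mod PP)" by (rule x_mod)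
    also have "(t + d) mod PP = (u + q) mod PP" unfolding u_def d_def by (simp add: mod_add_left_eq mod_add_right_eq)
    also have "x ((u + q) mod PP) = x (q + u)" using x_mod[of "u + q"] by (simp add: add.commute)
    also have "\<dots> = x u" using assms u by blast
    also have "\<dots> = x t" using x_mod[of t] u_def by simp
    finally show ?thesis .
  qed
  then show False using PP_min[OF d] by blast
qed

definition NN :: nat where "NN = Suc PP"

lemma NN_ge1: "1 \<le> NN" by (simp add: NN_def)

lemma PP_le_H: "NN \<le> n \<Longrightarrow> PP \<le> H n"
  using H_gt[of n] unfolding NN_def by simp

lemma dvd_off: "NN \<le> n \<Longrightarrow> i < p n \<Longrightarrow> PP dvd off n i"
  using PP_le_H x_copy by (intro dvd_of_shift) (meson less_le_trans)

lemma x_off0: "NN \<le> n \<Longrightarrow> i < p n \<Longrightarrow> x (off n i) = 0"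
  using x_copy[of i n 0] H_pos[of n] x0 by simp

lemma D3:
  assumes n: "NN \<le> n" and i: "Suc i < p n"
  shows "s n i < PP \<and> PP dvd (H n + s n i)"
proof -
  have d1: "PP dvd off n i" using dvd_off n i by simp
  have d2: "PP dvd off n (Suc i)" using dvd_off n i by simp
  have "off n (Suc i) = off n i + (H n + s n i)" by (simp add: off_Suc)
  then have dv: "PP dvd (H n + s n i)" using d1 d2 by (simp add: dvd_add_right_iff)
  have "s n i < PP"
  proof (rule ccontr)
    assume "\<not> s n i < PP"
    define q where "q = off n (Suc i) - PP"
    have q: "q = off n i + H n + (s n i - PP)" unfolding q_def off_Suc using \<open>\<not> s n i < PP\<close> by simp
    have "x q = 1" unfolding q using x_spacer[of i n "s n i - PP"] i PP_props(1) \<open>\<not> s n i < PP\<close> by simp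
    moreover have "q + PP = off n (Suc i)" unfolding q off_Suc using \<open>\<not> s n i < PP\<close> by simp
    ultimately have "x (off n (Suc i)) = 1" using PP_props(2)[of q] by simp
    then show False using x_off0[OF n i] by simp
  qed
  then show ?thesis using dv by simp
qed

lemma D4:
  assumes n: "NN \<le> n"
  shows "s n (p n - 1) + s (Suc n) 0 < PP \<and> PP dvd (H n + (s n (p n - 1) + s (Suc n) 0))"
proof -
  let ?a = "off n (p n - 1)" and ?b = "s n (p n - 1)" and ?c = "s (Suc n) 0"
  have pm: "p n - 1 < p n" "Suc (p n - 1) = p n" using p_pos[of n] by auto
  have HS: "H (Suc n) = ?a + H n + ?b" using off_p[of n] off_Suc[of n "p n - 1"] pm by simp
  have n1: "NN \<le> Suc n" using n by simp
  have p1: "1 < p (Suc n)" using p2[of "Suc n"] by simp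
  define Q where "Q = off (Suc n) 1"
  have Q: "Q = H (Suc n) + ?c" unfolding Q_def using off_Suc[of "Suc n" 0] by (simp add: off_def)
  have d1: "PP dvd ?a" using dvd_off n pm by simp
  have d2: "PP dvd Q" unfolding Q_def using dvd_off[OF n1 p1] .
  have "Q = ?a + (H n + (?b + ?c))" using Q HS by simp
  then have dv: "PP dvd H n + (?b + ?c)" using d1 d2 by (simp add: dvd_add_right_iff)
  have "?b + ?c < PP"
  proof (rule ccontr)
    assume nl: "\<not> ?b + ?c < PP"
    define q where "q = Q - PP"
    have QP: "PP \<le> Q" "?a + H n + PP \<le> Q" using Q HS nl by linarith+
    have qP: "q + PP = Q" unfolding q_def using QP(1) by simp
    have qa: "?a + H n \<le> q" "q < Q" using qP QP PP_props(1) by linarith+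
    have "x q = 1"
    proof (cases "q < H (Suc n)")
      case True
      define t where "t = q - ?a - H n"
      have t: "q = ?a + H n + t" "t < ?b" using True qa HS unfolding t_def by linarith+
      show ?thesis unfolding t(1) using x_spacer[OF pm(1) t(2)] .
    next
      case False
      define t where "t = q - H (Suc n)"
      have o0: "off (Suc n) 0 = 0" by (simp add: off_def)
      have t: "q = off (Suc n) 0 + H (Suc n) + t" "t < ?c" using False qa Q unfolding t_def o0
        by linarith+
      show ?thesis unfolding t(1) using x_spacer[OF p_pos t(2)] .
    qed
    moreover note qP
    ultimately have "x Q = 1" using PP_props(2)[of q] by simp
    then show False using x_off0[OF n1 p1] Q_def by simp
  qed
  then show ?thesis using dv by simp
qed

definition G :: "nat \<Rightarrow> nat" where "G n = H n + s n 0"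

lemma s_const: "NN \<le> n \<Longrightarrow> Suc i < p n \<Longrightarrow> s n i = s n 0"
proof -
  assume a: "NN \<le> n" "Suc i < p n"
  have b: "Suc 0 < p n" using p2[of n] by simp
  show ?thesis using D3[OF a] D3[OF a(1) b] dvd_eq_small[of PP "H n" "s n i" "s n 0"] by blast
qed

lemma off_G: "NN \<le> n \<Longrightarrow> i < p n \<Longrightarrow> off n i = i * G n"
proof (induction i)
  case 0 then show ?case by (simp add: off_def)
next
  case (Suc i)
  then have "off n (Suc i) = i * G n + H n + s n i" by (simp add: off_Suc)
  also have "s n i = s n 0" using Suc.prems by (intro s_const) auto
  finally show ?case by (simp add: G_def)
qed

lemma G_Suc: "NN \<le> n \<Longrightarrow> G (Suc n) = p n * G n"
proof -
  assume n: "NN \<le> n"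
  have pm: "p n - 1 < p n" "Suc (p n - 1) = p n" using p_pos[of n] by auto
  have HS: "H (Suc n) = off n (p n - 1) + H n + s n (p n - 1)"
    using off_p[of n] off_Suc[of n "p n - 1"] pm by simp
  have b: "Suc 0 < p n" using p2[of n] by simp
  have e: "s n (p n - 1) + s (Suc n) 0 = s n 0"
    using D4[OF n] D3[OF n b] dvd_eq_small[of PP "H n" "s n (p n - 1) + s (Suc n) 0" "s n 0"] by blast
  have "G (Suc n) = (p n - 1) * G n + H n + (s n (p n - 1) + s (Suc n) 0)"
    unfolding G_def[of "Suc n"] HS off_G[OF n pm(1)] by simp
  also have "\<dots> = (p n - 1) * G n + G n" unfolding e G_def by simp
  also have "\<dots> = p n * G n" using p_pos[of n] by (cases "p n") auto
  finally show ?thesis .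
qed

lemma H_le_G: "H n \<le> G n" by (simp add: G_def)

lemma G_lt: "NN \<le> n \<Longrightarrow> G n < H n + PP"
  using D3[of n 0] p2[of n] by (simp add: G_def)

lemma H_Suc_G: "NN \<le> n \<Longrightarrow> (p n - 1) * G n + H n \<le> H (Suc n)"
proof -
  assume n: "NN \<le> n"
  have pm: "p n - 1 < p n" "Suc (p n - 1) = p n" using p_pos[of n] by auto
  have HS: "H (Suc n) = off n (p n - 1) + H n + s n (p n - 1)"
    using off_p[of n] off_Suc[of n "p n - 1"] pm by simp
  then show ?thesis using off_G[OF n pm(1)] by simp
qed

end

locale odo =
  fixes r :: "nat \<Rightarrow> nat"
  assumes r2: "\<And>k. 2 \<le> r k"
begin

definition R :: "nat \<Rightarrow> nat" where "R k = prod r {..k}"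

lemma R_0: "R 0 = r 0" by (simp add: R_def)
lemma R_Suc: "R (Suc k) = R k * r (Suc k)" by (simp add: R_def)
lemma r_pos: "0 < r k" using r2[of k] by simp
lemma R_pos: "0 < R k" unfolding R_def using r_pos by (simp add: prod_pos)
lemma R_dvd: "j \<le> k \<Longrightarrow> R j dvd R k"
  unfolding R_def by (intro prod_dvd_prod_subset) auto

primrec num :: "(nat \<Rightarrow> nat) \<Rightarrow> nat \<Rightarrow> nat" where
  "num y 0 = y 0"
| "num y (Suc k) = num y k + y (Suc k) * R k"

definition spc :: "(nat \<Rightarrow> nat) set" where "spc = {y. \<forall>k. y k < r k}"

abbreviation "NM \<equiv> odometer_measure r"

lemma space_NM: "space NM = spc"
  by (auto simp: odometer_measure_def space_PiM spc_def space_uniform_count_measure PiE_def extensional_def)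

lemma num_lt: "y \<in> spc \<Longrightarrow> num y k < R k"
proof (induction k)
  case 0 then show ?case by (simp add: spc_def R_0)
next
  case (Suc k)
  have "y (Suc k) + 1 \<le> r (Suc k)" using Suc.prems by (simp add: spc_def Suc_le_eq)
  then have "(y (Suc k) + 1) * R k \<le> r (Suc k) * R k" by (rule mult_right_mono) simp
  then show ?case using Suc by (simp add: R_Suc algebra_simps)
qed

lemma num_mod_Suc: "y \<in> spc \<Longrightarrow> num y (Suc k) mod R k = num y k"
  using num_lt[of y k] by simp

lemma num_mod: "y \<in> spc \<Longrightarrow> j \<le> k \<Longrightarrow> num y k mod R j = num y j"
proof (induction k)
  case 0 then show ?case using num_lt[of y 0] by simp
next
  case (Suc k)
  show ?case
  proof (cases "j = Suc k")
    case True then show ?thesis using num_lt[OF Suc.prems(1), of j] by (metis mod_less)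
  next
    case False
    then have jk: "j \<le> k" using Suc by simp
    have "num y (Suc k) mod R j = (num y (Suc k) mod R k) mod R j"
      using R_dvd[OF jk] by (metis mod_mod_cancel)
    also have "\<dots> = num y j" using num_mod_Suc[OF Suc.prems(1)] Suc.IH[OF Suc.prems(1) jk] by simp
    finally show ?thesis .
  qed
qed

lemma num_inj: "(\<And>k. num y k = num y' k) \<Longrightarrow> y = y'"
proof
  fix k assume a: "\<And>k. num y k = num y' k"
  show "y k = y' k"
  proof (cases k)
    case 0 then show ?thesis using a[of 0] by simp
  next
    case (Suc j)
    have "y (Suc j) * R j = y' (Suc j) * R j" using a[of "Suc j"] a[of j] by simp
    then show ?thesis using R_pos[of j] Suc by simp
  qed
qed

fun D :: "nat \<Rightarrow> nat \<Rightarrow> nat" where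
  "D 0 \<rho> = \<rho> mod R 0"
| "D (Suc j) \<rho> = (\<rho> mod R (Suc j)) div R j"

lemma num_D: "y \<in> spc \<Longrightarrow> j \<le> k \<Longrightarrow> y j = D j (num y k)"
proof (cases j)
  case 0
  assume "y \<in> spc" "j \<le> k"
  moreover have "y 0 < R 0" using \<open>y \<in> spc\<close> by (simp add: spc_def R_0)
  ultimately show ?thesis using 0 num_mod[of y 0 k] by simp
next
  case (Suc i)
  assume a: "y \<in> spc" "j \<le> k"
  have "num y k mod R (Suc i) = num y i + y (Suc i) * R i" using num_mod[OF a(1)] a(2) Suc by simp
  then have "D j (num y k) = (num y i + y (Suc i) * R i) div R i" using Suc by simp
  also have "\<dots> = y (Suc i)" using num_lt[OF a(1), of i] R_pos[of i] by simp
  finally show ?thesis using Suc by simp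
qed

lemma num_D_inv: "num (\<lambda>j. D j \<rho>) k = \<rho> mod R k"
proof (induction k)
  case 0 then show ?case by simp
next
  case (Suc k)
  have "\<rho> mod R k = (\<rho> mod R (Suc k)) mod R k" using R_dvd[of k "Suc k"] by (simp add: mod_mod_cancel)
  then show ?case using Suc by (simp add: mod_div_mult_eq)
qed

lemma num_local: "(\<And>j. j \<le> k \<Longrightarrow> y j = y' j) \<Longrightarrow> num y k = num y' k"
  by (induction k) auto

lemma cyl_iff:
  assumes "y \<in> spc" "\<rho> < R k"
  shows "num y k = \<rho> \<longleftrightarrow> (\<forall>j\<le>k. y j = D j \<rho>)"
proof
  assume "num y k = \<rho>" then show "\<forall>j\<le>k. y j = D j \<rho>" using num_D[OF assms(1)] by blast
next
  assume "\<forall>j\<le>k. y j = D j \<rho>"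
  then have "num y k = num (\<lambda>j. D j \<rho>) k" by (intro num_local) auto
  then show "num y k = \<rho>" using num_D_inv assms by simp
qed

lemma D_lt: "\<rho> < R k \<Longrightarrow> j \<le> k \<Longrightarrow> D j \<rho> < r j"
proof (cases j)
  case 0 then show ?thesis using R_pos[of 0] by (simp add: R_0)
next
  case (Suc i)
  have "\<rho> mod R (Suc i) < R i * r (Suc i)" using R_pos[of "Suc i"] by (simp add: R_Suc)
  then show ?thesis using Suc R_pos[of i] by (simp add: less_mult_imp_div_less mult.commute)
qed

abbreviation "S \<equiv> odometer_map r"

lemma odo_char:
  assumes y: "y \<in> spc"
  shows "S y j = (if \<forall>l<j. y l = r l - 1 then (y j + 1) mod r j else y j)"
proof (cases "\<exists>k. Suc (y k) < r k")
  case True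
  define K where "K = (LEAST k. Suc (y k) < r k)"
  have K1: "Suc (y K) < r K" unfolding K_def using True by (rule LeastI_ex)
  have K2: "l < K \<Longrightarrow> y l = r l - 1" for l
  proof -
    assume "l < K"
    then have "\<not> Suc (y l) < r l" unfolding K_def by (rule not_less_Least)
    moreover have "y l < r l" using y by (simp add: spc_def)
    ultimately show ?thesis by simp
  qed
  have Sy: "S y j = (if j < K then 0 else if j = K then Suc (y K) else y j)"
  proof -
    have "S y = (let k = (LEAST k. Suc (y k) < r k)
            in (\<lambda>j. if j < k then 0 else if j = k then Suc (y k) else y j))"
      unfolding odometer_map_def by (rule if_P[OF True])
    then show ?thesis unfolding K_def[symmetric] Let_def by simp
  qed
  show ?thesis
  proof (cases "j < K")
    case True
    then have "\<forall>l<j. y l = r l - 1" "y j = r j - 1" using K2 by auto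
    then show ?thesis using Sy True r_pos[of j] by simp
  next
    case False
    show ?thesis
    proof (cases "j = K")
      case True then show ?thesis using Sy K1 K2 by simp
    next
      case False
      then have "K < j" using \<open>\<not> j < K\<close> by simp
      have "y K \<noteq> r K - 1" using K1 by simp
      then have nall: "\<not> (\<forall>l<j. y l = r l - 1)" using \<open>K < j\<close> by blast
      have "S y j = y j" using Sy \<open>\<not> j < K\<close> False by simp
      then show ?thesis by (subst if_not_P[OF nall])
    qed
  qed
next
  case False
  have m: "y l = r l - 1" for l
  proof -
    have "\<not> Suc (y l) < r l" using False by blast
    moreover have "y l < r l" using y by (simp add: spc_def)
    ultimately show ?thesis by arith
  qed
  have "S y j = 0" unfolding odometer_map_def by (simp only: if_not_P[OF False])
  then show ?thesis using m r_pos[of j] by simp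
qed

lemma odo_spc: "y \<in> spc \<Longrightarrow> S y \<in> spc"
  using odo_char r_pos by (auto simp: spc_def)

lemma am_iff: "y \<in> spc \<Longrightarrow> (\<forall>l\<le>k. y l = r l - 1) \<longleftrightarrow> num y k + 1 = R k"
proof (induction k)
  case 0 then show ?case using r_pos[of 0] by (auto simp: R_0 spc_def)
next
  case (Suc k)
  have yk: "y (Suc k) < r (Suc k)" using Suc.prems by (simp add: spc_def)
  have nl: "num y k < R k" using num_lt Suc.prems by blast
  show ?case
  proof (cases "\<forall>l\<le>k. y l = r l - 1")
    case True
    then have e: "num y k + 1 = R k" using Suc by simp
    have A: "num y (Suc k) + 1 = R k * (y (Suc k) + 1)" using e by (simp add: algebra_simps)
    have B: "R (Suc k) = R k * r (Suc k)" by (simp add: R_Suc)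
    have C: "R k * (y (Suc k) + 1) = R k * r (Suc k) \<longleftrightarrow> y (Suc k) + 1 = r (Suc k)"
      by (simp only: mult_cancel_left) (use R_pos[of k] in simp)
    have "num y (Suc k) + 1 = R (Suc k) \<longleftrightarrow> y (Suc k) + 1 = r (Suc k)"
      by (simp only: A B C)
    moreover have "(\<forall>l\<le>Suc k. y l = r l - 1) \<longleftrightarrow> y (Suc k) = r (Suc k) - 1"
      using True by (auto simp: le_Suc_eq)
    ultimately show ?thesis using yk by auto
  next
    case False
    then have "num y k + 1 \<noteq> R k" using Suc.IH[OF Suc.prems] by auto
    then have "num y k + 1 < R k" using nl by linarith
    then have "num y (Suc k) + 1 < R k + y (Suc k) * R k" by simp
    also have "\<dots> = (y (Suc k) + 1) * R k" by simp
    also have "\<dots> \<le> r (Suc k) * R k" using yk by (intro mult_right_mono) auto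
    finally have ne: "num y (Suc k) + 1 \<noteq> R (Suc k)" by (simp add: R_Suc mult.commute)
    have "\<not> (\<forall>l\<le>Suc k. y l = r l - 1)" using False by (meson le_SucI)
    then show ?thesis using ne by blast
  qed
qed

lemma odo_num: "y \<in> spc \<Longrightarrow> num (S y) k = (num y k + 1) mod R k"
proof (induction k)
  case 0 then show ?case using odo_char[of y 0] by (simp add: R_0)
next
  case (Suc k)
  have y: "y \<in> spc" by fact
  have ch: "S y (Suc k) = (if \<forall>l\<le>k. y l = r l - 1 then (y (Suc k) + 1) mod r (Suc k) else y (Suc k))"
    using odo_char[OF y, of "Suc k"] by (simp add: less_Suc_eq_le)
  show ?case
  proof (cases "\<forall>l\<le>k. y l = r l - 1")
    case True
    then have e: "num y k + 1 = R k" using am_iff y by blast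
    have "num (S y) (Suc k) = ((y (Suc k) + 1) mod r (Suc k)) * R k"
      using Suc.IH[OF y] e ch True by simp
    also have "\<dots> = ((y (Suc k) + 1) * R k) mod (r (Suc k) * R k)" by (rule mod_mult_mult2[symmetric])
    also have "(y (Suc k) + 1) * R k = num y (Suc k) + 1" using e by (simp add: algebra_simps)
    also have "r (Suc k) * R k = R (Suc k)" by (simp add: R_Suc)
    finally show ?thesis .
  next
    case False
    then have ne: "num y k + 1 \<noteq> R k" using am_iff y by blast
    then have lt: "num y k + 1 < R k" using num_lt[OF y, of k] by simp
    have ne2: "num y (Suc k) + 1 \<noteq> R (Suc k)" using am_iff[OF y, of "Suc k"] False by auto
    then have lt2: "num y (Suc k) + 1 < R (Suc k)" using num_lt[OF y, of "Suc k"] by simp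
    have "num (S y) (Suc k) = num y k + 1 + y (Suc k) * R k" using Suc.IH[OF y] lt ch False by auto
    then show ?thesis using lt2 by simp
  qed
qed

definition Bset :: "(nat \<Rightarrow> nat) set" where
  "Bset = {y \<in> spc. \<forall>k. \<exists>k'\<ge>k. y k' \<noteq> r k' - 1}"

lemma odo_B: "y \<in> Bset \<Longrightarrow> S y \<in> Bset"
proof -
  assume yB: "y \<in> Bset"
  then have y: "y \<in> spc" by (simp add: Bset_def)
  obtain l0 where l0: "y l0 \<noteq> r l0 - 1" using yB unfolding Bset_def by blast
  have eq: "l0 < j \<Longrightarrow> S y j = y j" for j using odo_char[OF y, of j] l0 by auto
  show ?thesis unfolding Bset_def
  proof (intro CollectI conjI allI)
    show "S y \<in> spc" using odo_spc y by blast
    fix k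
    obtain k' where k': "k' \<ge> max k (Suc l0)" "y k' \<noteq> r k' - 1" using yB unfolding Bset_def by blast
    then show "\<exists>k'\<ge>k. S y k' \<noteq> r k' - 1" using eq[of k'] by (intro exI[of _ k']) auto
  qed
qed

end

context odo begin

abbreviation "ML \<equiv> (\<lambda>k. uniform_count_measure {0..<r k})"

lemma NM_def': "NM = PiM UNIV ML" by (simp add: odometer_measure_def)

lemma prob_ML: "prob_space (ML k)"
  using r_pos[of k] by (intro prob_space_uniform_count_measure) auto

lemma prob_NM: "prob_space NM"
  unfolding NM_def' by (intro prob_space_PiM prob_ML)

lemma sets_ML: "sets (ML k) = Pow {0..<r k}"
  by (simp add: sets_uniform_count_measure)

lemma box_eq:
  assumes "\<And>j. j \<in> J \<Longrightarrow> A j \<subseteq> {0..<r j}"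
  shows "prod_emb UNIV ML J (Pi\<^sub>E J A) = {y \<in> spc. \<forall>j\<in>J. y j \<in> A j}"
  unfolding set_eq_iff prod_emb_iff restrict_PiE_iff spc_def
  by (auto simp: space_uniform_count_measure)

lemma box_sets:
  assumes "finite J" "\<And>j. j \<in> J \<Longrightarrow> A j \<subseteq> {0..<r j}"
  shows "{y \<in> spc. \<forall>j\<in>J. y j \<in> A j} \<in> sets NM"
proof -
  have "prod_emb UNIV ML J (Pi\<^sub>E J A) \<in> sets (Pi\<^sub>M UNIV ML)"
    using assms by (intro sets_PiM_I) (auto simp: sets_ML)
  then show ?thesis using box_eq[OF assms(2)] NM_def' by simp
qed

lemma box_measure:
  assumes "finite J" "\<And>j. j \<in> J \<Longrightarrow> A j \<subseteq> {0..<r j}"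
  shows "emeasure NM {y \<in> spc. \<forall>j\<in>J. y j \<in> A j} = (\<Prod>j\<in>J. ennreal (real (card (A j)) / real (r j)))"
proof -
  have "emeasure NM {y \<in> spc. \<forall>j\<in>J. y j \<in> A j} = emeasure (Pi\<^sub>M UNIV ML) (prod_emb UNIV ML J (Pi\<^sub>E J A))"
    using box_eq[OF assms(2)] NM_def' by simp
  also have "\<dots> = (\<Prod>j\<in>J. emeasure (ML j) (A j))"
    using assms by (intro emeasure_PiM_emb prob_ML) (auto simp: sets_ML)
  also have "\<dots> = (\<Prod>j\<in>J. ennreal (real (card (A j)) / real (r j)))"
  proof (intro prod.cong refl)
    fix j assume j: "j \<in> J"
    have "emeasure (ML j) (A j) = ennreal (real (card (A j)) / real (card {0..<r j}))"
      using assms j by (intro emeasure_uniform_count_measure) auto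
    then show "emeasure (ML j) (A j) = ennreal (real (card (A j)) / real (r j))" by simp
  qed
  finally show ?thesis .
qed

definition C :: "nat \<Rightarrow> nat \<Rightarrow> (nat \<Rightarrow> nat) set" where
  "C k \<rho> = {y \<in> spc. num y k = \<rho>}"

lemma C_box: "\<rho> < R k \<Longrightarrow> C k \<rho> = {y \<in> spc. \<forall>j\<in>{..k}. y j \<in> {D j \<rho>}}"
  unfolding C_def using cyl_iff by auto

lemma C_empty: "\<not> \<rho> < R k \<Longrightarrow> C k \<rho> = {}"
  unfolding C_def using num_lt by fastforce

lemma C_sets: "C k \<rho> \<in> sets NM"
proof (cases "\<rho> < R k")
  case True
  then show ?thesis unfolding C_box[OF True] using D_lt[OF True] by (intro box_sets) auto
next
  case False then show ?thesis by (simp add: C_empty)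
qed

lemma R_real: "real (R k) = (\<Prod>j\<in>{..k}. real (r j))"
  by (simp add: R_def)

lemma C_measure: "\<rho> < R k \<Longrightarrow> emeasure NM (C k \<rho>) = ennreal (1 / real (R k))"
proof -
  assume a: "\<rho> < R k"
  have "emeasure NM (C k \<rho>) = (\<Prod>j\<in>{..k}. ennreal (real (card {D j \<rho>}) / real (r j)))"
    unfolding C_box[OF a] using D_lt[OF a] by (intro box_measure) auto
  also have "\<dots> = (\<Prod>j\<in>{..k}. ennreal (1 / real (r j)))" by simp
  also have "\<dots> = ennreal (\<Prod>j\<in>{..k}. 1 / real (r j))" by (intro prod_ennreal) simp
  also have "(\<Prod>j\<in>{..k}. 1 / real (r j)) = 1 / real (R k)"
    unfolding R_real by (simp add: prod_dividef)
  finally show ?thesis .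
qed

lemma num_meas: "(\<lambda>y. num y k) \<in> measurable NM (count_space UNIV)"
proof -
  have "(\<lambda>y. num y k) -` {\<rho>} \<inter> space NM = C k \<rho>" for \<rho>
    by (auto simp: C_def space_NM)
  then show ?thesis using C_sets by (simp add: measurable_count_space_eq2_countable)
qed

lemma sum_C:
  assumes "sets Mx = sets NM" "finite Rs"
  shows "emeasure Mx (\<Union>\<rho>\<in>Rs. C k \<rho>) = (\<Sum>\<rho>\<in>Rs. emeasure Mx (C k \<rho>))"
proof -
  have "disjoint_family_on (C k) Rs" by (auto simp: disjoint_family_on_def C_def)
  then show ?thesis using assms C_sets by (intro sum_emeasure[symmetric]) auto
qed

lemma box_as_C:
  assumes "finite J" "\<And>j. j \<in> J \<Longrightarrow> A j \<subseteq> {0..<r j}"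
  defines "K \<equiv> Max (insert 0 J)"
  shows "{y \<in> spc. \<forall>j\<in>J. y j \<in> A j} = (\<Union>\<rho>\<in>{\<rho>. \<rho> < R K \<and> (\<forall>j\<in>J. D j \<rho> \<in> A j)}. C K \<rho>)"
proof -
  have jK: "j \<in> J \<Longrightarrow> j \<le> K" for j unfolding K_def using assms(1) by simp
  show ?thesis
  proof safe
    fix y assume y: "y \<in> spc" "\<forall>j\<in>J. y j \<in> A j"
    have "num y K < R K" using num_lt y by blast
    moreover have "\<forall>j\<in>J. D j (num y K) \<in> A j" using y num_D jK by metis
    ultimately show "y \<in> (\<Union>\<rho>\<in>{\<rho>. \<rho> < R K \<and> (\<forall>j\<in>J. D j \<rho> \<in> A j)}. C K \<rho>)"
      using y by (auto simp: C_def)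
  next
    fix y \<rho> assume "y \<in> C K \<rho>" "\<rho> < R K" "\<forall>j\<in>J. D j \<rho> \<in> A j"
    then show "y \<in> spc" by (simp add: C_def)
    fix j assume "j \<in> J"
    then show "y j \<in> A j" using \<open>y \<in> C K \<rho>\<close> \<open>\<forall>j\<in>J. D j \<rho> \<in> A j\<close> num_D jK by (auto simp: C_def)
  qed
qed

lemma odo_eqI:
  assumes sets: "sets Mx = sets NM" and fin: "finite_measure Mx"
    and eq: "\<And>k \<rho>. \<rho> < R k \<Longrightarrow> emeasure Mx (C k \<rho>) = ennreal (1 / real (R k))"
  shows "Mx = NM"
  unfolding NM_def'
proof (rule measure_eqI_PiM_infinite)
  show "sets Mx = sets (Pi\<^sub>M UNIV ML)" using sets NM_def' by simp
  show "sets (Pi\<^sub>M UNIV ML) = sets (Pi\<^sub>M UNIV ML)" ..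
  show "finite_measure Mx" by fact
  fix A J assume J: "finite J" "J \<subseteq> UNIV" "\<And>i. i \<in> J \<Longrightarrow> A i \<in> sets (ML i)"
  then have AJ: "\<And>j. j \<in> J \<Longrightarrow> A j \<subseteq> {0..<r j}" by (auto simp: sets_ML)
  define K where "K = Max (insert 0 J)"
  define Rs where "Rs = {\<rho>. \<rho> < R K \<and> (\<forall>j\<in>J. D j \<rho> \<in> A j)}"
  have Rs: "finite Rs" unfolding Rs_def by simp
  have X: "prod_emb UNIV ML J (Pi\<^sub>E J A) = (\<Union>\<rho>\<in>Rs. C K \<rho>)"
    using box_eq[OF AJ] box_as_C[OF J(1) AJ] unfolding K_def Rs_def by simp
  have "emeasure Mx (\<Union>\<rho>\<in>Rs. C K \<rho>) = (\<Sum>\<rho>\<in>Rs. emeasure Mx (C K \<rho>))" by (rule sum_C[OF sets Rs])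
  also have "\<dots> = (\<Sum>\<rho>\<in>Rs. emeasure NM (C K \<rho>))"
    using eq C_measure by (intro sum.cong refl) (simp add: Rs_def)
  also have "\<dots> = emeasure NM (\<Union>\<rho>\<in>Rs. C K \<rho>)" by (rule sum_C[OF refl Rs, symmetric])
  finally show "emeasure Mx (prod_emb UNIV ML J (Pi\<^sub>E J A)) = emeasure (Pi\<^sub>M UNIV ML) (prod_emb UNIV ML J (Pi\<^sub>E J A))"
    unfolding X NM_def' .
qed

definition E :: "nat \<Rightarrow> (nat \<Rightarrow> nat) set" where
  "E k = {y \<in> spc. \<forall>k'\<ge>k. y k' = r k' - 1}"

lemma single_sets: "{y \<in> spc. y j = r j - 1} \<in> sets NM"
  using box_sets[of "{j}" "\<lambda>_. {r j - 1}"] r_pos[of j] by auto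

lemma E_sets: "E k \<in> sets NM"
proof -
  have "E k = (\<Inter>k'\<in>{k..}. {y \<in> spc. y k' = r k' - 1})" unfolding E_def by auto
  also have "\<dots> \<in> sets NM" using single_sets by (intro sets.countable_INT) auto
  finally show ?thesis .
qed

lemma E_null: "E k \<in> null_sets NM"
proof -
  interpret P: prob_space NM by (rule prob_NM)
  have le: "measure NM (E k) \<le> (1/2)^L" for L
  proof -
    let ?F = "{y \<in> spc. \<forall>j\<in>{k..<k+L}. y j \<in> {r j - 1}}"
    have sub: "E k \<subseteq> ?F" unfolding E_def by auto
    have Fs: "?F \<in> sets NM" using r_pos by (intro box_sets) auto
    have "emeasure NM ?F = (\<Prod>j\<in>{k..<k+L}. ennreal (real (card {r j - 1}) / real (r j)))"
      using r_pos by (intro box_measure) auto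
    also have "\<dots> = ennreal (\<Prod>j\<in>{k..<k+L}. 1 / real (r j))" by (simp add: prod_ennreal)
    finally have "measure NM ?F = (\<Prod>j\<in>{k..<k+L}. 1 / real (r j))"
      by (simp add: P.emeasure_eq_measure prod_nonneg)
    also have "\<dots> \<le> (\<Prod>j\<in>{k..<k+L}. 1/2)"
    proof (intro prod_mono conjI)
      fix j show "0 \<le> 1 / real (r j)" by simp
      show "1 / real (r j) \<le> 1/2" using r2[of j] by (simp add: field_simps)
    qed
    also have "\<dots> = (1/2)^L" by simp
    finally show ?thesis using P.finite_measure_mono[OF sub Fs] by linarith
  qed
  have "measure NM (E k) \<le> 0"
  proof (rule ccontr)
    assume "\<not> measure NM (E k) \<le> 0"
    then obtain L where "(1/2::real)^L < measure NM (E k)" using real_arch_pow_inv[of "measure NM (E k)" "1/2"] by auto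
    then show False using le[of L] by simp
  qed
  then have "measure NM (E k) = 0" using measure_nonneg[of NM "E k"] by linarith
  then show ?thesis using E_sets by (simp add: P.emeasure_eq_measure null_sets_def)
qed

lemma spc_minus_B: "spc - Bset = (\<Union>k. E k)"
  unfolding Bset_def E_def by auto

lemma B_sets: "Bset \<in> sets NM"
proof -
  have "Bset = space NM - (\<Union>k. E k)" using spc_minus_B space_NM Bset_def by auto
  also have "\<dots> \<in> sets NM" using E_sets by auto
  finally show ?thesis .
qed

lemma B_null: "emeasure NM (space NM - Bset) = 0"
proof -
  have "(\<Union>k. E k) \<in> null_sets NM" using E_null by (intro null_sets_UN)
  then show ?thesis using spc_minus_B space_NM by (simp add: null_sets_def)
qed

end

context rk2 begin

definition tw :: "nat \<Rightarrow> real \<Rightarrow> bool" where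
  "tw n y \<longleftrightarrow> 0 \<le> y \<and> y < real (H n) * W n"

definition lev :: "nat \<Rightarrow> real \<Rightarrow> nat" where
  "lev n y = (THE j. j < H n \<and> y \<in> lv n j)"

lemma lev_eq: "j < H n \<Longrightarrow> y \<in> lv n j \<Longrightarrow> lev n y = j"
  unfolding lev_def by (rule the_equality) (auto intro: level_unique)

lemma lev: "tw n y \<Longrightarrow> lev n y < H n \<and> y \<in> lv n (lev n y)"
  using tower_level[of y n] lev_eq unfolding tw_def by force

lemma tw_level: "j < H n \<Longrightarrow> y \<in> lv n j \<Longrightarrow> tw n y"
  using level_sub_tower unfolding tw_def by blast

lemma HW_Suc: "real (H n) * W n \<le> real (H (Suc n)) * W (Suc n)"
proof -
  have P: "0 < real (p n)" using p_pos[of n] by simp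
  have nat: "p n * H n \<le> H (Suc n)" by simp
  have "real (p n * H n) \<le> real (H (Suc n))" using nat by (simp only: of_nat_le_iff)
  then have "real (p n) * real (H n) * (W n / real (p n)) \<le> real (H (Suc n)) * (W n / real (p n))"
    using W_pos[of n] P by (intro mult_right_mono) auto
  then show ?thesis using P by (simp add: W_Suc)
qed

lemma HW_mono: "n \<le> m \<Longrightarrow> real (H n) * W n \<le> real (H m) * W m"
  using lift_Suc_mono_le[of "\<lambda>n. real (H n) * W n", OF HW_Suc] by blast

lemma tw_mono: "tw n y \<Longrightarrow> n \<le> m \<Longrightarrow> tw m y"
  using HW_mono unfolding tw_def by (meson less_le_trans)

definition a0 :: real where "a0 = real (G NN) * W NN"

lemma GW: "NN \<le> n \<Longrightarrow> real (G n) * W n = a0"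
proof (induction n rule: dec_induct)
  case base then show ?case by (simp add: a0_def)
next
  case (step n)
  have P: "real (p n) \<noteq> 0" using p_pos[of n] by simp
  have "real (G (Suc n)) * W (Suc n) = real (G n) * W n"
    using G_Suc[OF step(1)] P by (simp add: W_Suc)
  then show ?case using step by simp
qed

lemma G_pos: "0 < G n" using H_pos[of n] H_le_G[of n] by simp

lemma a0_pos: "0 < a0" unfolding a0_def using G_pos W_pos by simp

lemma tw_a0: "tw n y \<Longrightarrow> 0 \<le> y \<and> y < a0"
proof -
  assume t: "tw n y"
  define m where "m = max n NN"
  have "tw m y" using tw_mono[OF t] m_def by simp
  then have "y < real (H m) * W m" unfolding tw_def by simp
  also have "\<dots> \<le> real (G m) * W m" using H_le_G[of m] W_pos[of m] by (intro mult_right_mono) auto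
  also have "\<dots> = a0" using GW m_def by simp
  finally show ?thesis using t tw_def by simp
qed

lemma tw_ex: "0 \<le> y \<Longrightarrow> y < a0 \<Longrightarrow> \<exists>m0\<ge>NN. \<forall>m\<ge>m0. tw m y"
proof -
  assume y: "0 \<le> y" "y < a0"
  have PP: "0 < real PP" using PP_props(1) by simp
  obtain m where m: "m \<ge> NN" "W m < (a0 - y) / PP" using W_small[of "(a0 - y) / PP" NN] y PP by auto
  have "a0 = real (G m) * W m" using GW m by simp
  also have "\<dots> < (real (H m) + PP) * W m"
    using G_lt[OF m(1)] W_pos[of m] by (intro mult_strict_right_mono) auto
  also have "\<dots> = real (H m) * W m + PP * W m" by (simp add: algebra_simps)
  finally have "y < real (H m) * W m" using m(2) PP by (simp add: field_simps)
  then have "tw m y" using y by (simp add: tw_def)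
  then show ?thesis using tw_mono m(1) by blast
qed

lemma Sp_eq: "rk_space p s = {0..<a0}"
proof -
  have len: "length (fst (rk_tower p s n)) = H n" for n using len_LL by (simp add: LL_def)
  show ?thesis
  proof (intro set_eqI iffI)
    fix y assume "y \<in> rk_space p s"
    then obtain n j where "j < H n" "y \<in> lv n j" unfolding rk_space_def len by auto
    then have "tw n y" by (rule tw_level)
    then show "y \<in> {0..<a0}" using tw_a0 by auto
  next
    fix y :: real assume "y \<in> {0..<a0}"
    then have "0 \<le> y" "y < a0" by auto
    then obtain m where "tw m y" using tw_ex by blast
    then have "lev m y < H m" "y \<in> lv m (lev m y)" using lev by auto
    then show "y \<in> rk_space p s" unfolding rk_space_def len by blast
  qed
qed

lemma G_dvd: assumes "NN \<le> n" "n \<le> n'" shows "G n dvd G n'"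
  using assms(2)
proof (induction n' rule: dec_induct)
  case base then show ?case by simp
next
  case (step n') then show ?case using G_Suc[of n'] assms(1) by simp
qed

lemma R0:
  assumes "NN \<le> n" "j < H n" "y \<in> lv n j"
  shows "j' < H (n + k) \<Longrightarrow> y \<in> lv (n + k) j' \<Longrightarrow> j' mod G n = j"
proof (induction k arbitrary: j')
  case 0
  then have "j' = j" using level_unique assms by simp
  then show ?case using assms H_le_G[of n] by simp
next
  case (Suc k)
  have t: "tw (n + k) y" using tw_mono[OF tw_level[OF assms(2,3)]] by simp
  define j'' where "j'' = lev (n + k) y"
  have j'': "j'' < H (n + k)" "y \<in> lv (n + k) j''" using lev[OF t] j''_def by auto
  have ih: "j'' mod G n = j" using Suc.IH j'' by blast
  obtain i where i: "i < p (n + k)" "y \<in> lv (Suc (n + k)) (off (n + k) i + j'')"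
    using level_split[OF j''] by blast
  have lt: "off (n + k) i + j'' < H (Suc (n + k))" using off_j_lt i j'' by blast
  have "j' = off (n + k) i + j''" using level_unique[OF _ lt _ i(2)] Suc.prems by simp
  also have "\<dots> = i * G (n + k) + j''" using off_G assms(1) i by simp
  finally have "j' mod G n = (i * G (n + k) + j'') mod G n" by simp
  also have "\<dots> = j'' mod G n"
    using G_dvd[OF assms(1), of "n + k"] by (auto simp: mod_add_left_eq[symmetric] elim!: dvdE)
  finally show ?case using ih by simp
qed

definition stg :: "nat \<Rightarrow> real \<Rightarrow> nat" where
  "stg m y = (LEAST m'. m \<le> m' \<and> tw m' y)"

definition res :: "nat \<Rightarrow> real \<Rightarrow> nat" where
  "res m y = (if 0 \<le> y \<and> y < a0 then lev (stg m y) y mod G m else 0)"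

lemma R1:
  assumes "NN \<le> m" "m \<le> m'" "J < H m'" "y \<in> lv m' J"
  shows "res m y = J mod G m"
proof -
  have t: "tw m' y" using tw_level assms by blast
  then have y: "0 \<le> y" "y < a0" using tw_a0 by auto
  define m'' where "m'' = stg m y"
  have m1: "m \<le> m'' \<and> tw m'' y" unfolding m''_def stg_def
    using t assms(2) by (intro LeastI[where P="\<lambda>m'. m \<le> m' \<and> tw m' y"]) auto
  have m2: "m'' \<le> m'" unfolding m''_def stg_def using t assms(2) by (intro Least_le) auto
  define j'' where "j'' = lev m'' y"
  have j'': "j'' < H m''" "y \<in> lv m'' j''" using lev m1 j''_def by auto
  have "J mod G m'' = j''"
    using R0[OF _ j'', where k = "m' - m''" and j' = J] assms m1 m2 by simp
  then have "J mod G m = j'' mod G m"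
    using G_dvd[OF assms(1), of m''] m1 by (metis mod_mod_cancel)
  then show ?thesis unfolding res_def using y j''_def m''_def by simp
qed

lemma res_lt: "res m y < G m"
  unfolding res_def using G_pos[of m] by simp

lemma res_mod:
  assumes "NN \<le> m" "m \<le> m'"
  shows "res m' y mod G m = res m y"
proof (cases "0 \<le> y \<and> y < a0")
  case True
  then obtain m0 where m0: "\<forall>m\<ge>m0. tw m y" using tw_ex by blast
  define M where "M = max m' m0"
  have "tw M y" using m0 M_def by simp
  then have J: "lev M y < H M" "y \<in> lv M (lev M y)" using lev by auto
  have "res m' y = lev M y mod G m'" using R1[OF _ _ J] assms M_def by simp
  moreover have "res m y = lev M y mod G m" using R1[OF _ _ J] assms M_def by simp
  ultimately show ?thesis using G_dvd[OF assms] by (simp add: mod_mod_cancel)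
next
  case False
  then have "res m' y = 0" "res m y = 0" unfolding res_def by auto
  then show ?thesis by simp
qed

lemma nontop_ex:
  assumes y: "0 \<le> y" "y < a0"
  shows "\<exists>m j. Suc j < H m \<and> y \<in> lv m j"
proof (rule ccontr)
  assume nt: "\<not> (\<exists>m j. Suc j < H m \<and> y \<in> lv m j)"
  obtain m0 where m0: "\<forall>m\<ge>m0. tw m y" using tw_ex y by blast
  define J where "J m = lev m y" for m
  have J1: "m0 \<le> m \<Longrightarrow> J m < H m \<and> y \<in> lv m (J m)" for m using lev m0 J_def by auto
  have top: "Suc (J m) = H m" if a: "m0 \<le> m" for m
  proof -
    have "\<not> Suc (J m) < H m" using nt J1[OF a] by blast
    then show ?thesis using J1[OF a] by linarith
  qed
  show False
  proof (rule rend_const_False[of m0 J y])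
    fix m assume m: "m0 \<le> m"
    show "J m < H m \<and> y \<in> lv m (J m)" using J1 m by blast
    obtain i where i: "i < p m" "y \<in> lv (Suc m) (off m i + J m)" using level_split J1[OF m] by blast
    have lt: "off m i + J m < H (Suc m)" using off_j_lt i J1[OF m] by blast
    have eq: "J (Suc m) = off m i + J m" using level_unique[OF _ lt _ i(2)] J1[of "Suc m"] m by simp
    have "i = p m - 1"
    proof (rule ccontr)
      assume "i \<noteq> p m - 1"
      then have "Suc i \<le> p m - 1" using i by simp
      then have "off m (Suc i) \<le> off m (p m - 1)" by (rule off_mono)
      moreover have "off m (p m - 1) + H m \<le> H (Suc m)" using off_le[of "p m - 1" m] p_pos[of m] by simp
      moreover have "off m (Suc i) = off m i + H m + s m i" by (rule off_Suc)
      ultimately have "Suc (J (Suc m)) < H (Suc m)" using eq top[OF m] H_pos[of m] by simp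
      then show False using top[of "Suc m"] m by simp
    qed
    then show "rend (Suc m) (J (Suc m)) = rend m (J m)" using eq rend_last J1[OF m] by simp
  qed
qed

lemma T_res:
  assumes y: "0 \<le> y" "y < a0" and m: "NN \<le> m"
  shows "res m (rk_map p s y) = Suc (res m y) mod G m \<and> 0 \<le> rk_map p s y \<and> rk_map p s y < a0"
proof -
  obtain m1 j where j: "Suc j < H m1" "y \<in> lv m1 j" using nontop_ex y by blast
  define M where "M = max m m1"
  obtain J where J: "y \<in> lv M J" "Suc J < H M" "transl M J = transl m1 j"
    using transl_steps[OF j(2) j(1), of M] M_def by auto
  have Ty: "rk_map p s y \<in> lv M (Suc J)" using rk_map_level[OF J(1,2)] .
  have "res m y = J mod G m" using R1[OF m _ _ J(1)] J(2) M_def by simp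
  moreover have "res m (rk_map p s y) = Suc J mod G m" using R1[OF m _ J(2) Ty] M_def by simp
  moreover have "tw M (rk_map p s y)" using tw_level[OF J(2) Ty] .
  ultimately show ?thesis using tw_a0 by (simp add: mod_Suc_eq)
qed

end

context rk2 begin

definition rr :: "nat \<Rightarrow> nat" where "rr k = (if k = 0 then G NN else p (NN + k - 1))"

lemma H_NN: "2 \<le> H NN" using H_gt[of NN] NN_ge1 by simp

lemma rr2: "2 \<le> rr k"
  unfolding rr_def using H_NN H_le_G[of NN] p2 by auto

sublocale O: odo rr by unfold_locales (rule rr2)

lemma rr_Suc: "rr (Suc k) = p (NN + k)" by (simp add: rr_def)

lemma spc_lt: "z \<in> O.spc \<Longrightarrow> z (Suc k) < p (NN + k)"
proof -
  assume "z \<in> O.spc"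
  then have "\<forall>k. z k < rr k" by (simp add: O.spc_def)
  then show ?thesis using rr_Suc by metis
qed

lemma R_G: "O.R k = G (NN + k)"
proof (induction k)
  case 0
  have "rr 0 = G NN" by (simp add: rr_def)
  then show ?case by (simp only: O.R_0 add_0_right)
next
  case (Suc k)
  have "O.R (Suc k) = O.R k * rr (Suc k)" by (rule O.R_Suc)
  also have "\<dots> = G (NN + k) * p (NN + k)" using Suc rr_Suc by simp
  finally have "O.R (Suc k) = G (NN + k) * p (NN + k)" .
  also have "\<dots> = G (NN + Suc k)" using G_Suc[of "NN + k"] by simp
  finally show ?case .
qed



definition phi :: "real \<Rightarrow> nat \<Rightarrow> nat" where
  "phi y k = (if k = 0 then res NN y else res (NN + k) y div G (NN + k - 1))"

lemma num_phi: "O.num (phi y) k = res (NN + k) y"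
proof (induction k)
  case 0
  have "phi y 0 = res NN y" by (simp add: phi_def)
  then show ?case by simp
next
  case (Suc k)
  have m: "res (NN + Suc k) y mod G (NN + k) = res (NN + k) y" by (rule res_mod) auto
  have ps: "phi y (Suc k) = res (NN + Suc k) y div G (NN + k)" by (simp add: phi_def)
  have "O.num (phi y) (Suc k) = res (NN + k) y + (res (NN + Suc k) y div G (NN + k)) * G (NN + k)"
    using Suc by (simp add: ps R_G)
  also have "\<dots> = res (NN + Suc k) y" unfolding m[symmetric] by (rule mod_div_mult_eq)
  finally show ?case .
qed

lemma phi_spc: "phi y \<in> O.spc"
  unfolding O.spc_def
proof (intro CollectI allI)
  fix k show "phi y k < rr k"
  proof (cases k)
    case 0 then show ?thesis using res_lt by (simp add: phi_def rr_def)
  next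
    case (Suc k')
    have "res (NN + Suc k') y < p (NN + k') * G (NN + k')"
      using res_lt[of "NN + Suc k'" y] G_Suc[of "NN + k'"] by simp
    then have "res (NN + Suc k') y div G (NN + k') < p (NN + k')" by (rule less_mult_imp_div_less)
    moreover have "phi y k = res (NN + Suc k') y div G (NN + k')" using Suc by (simp add: phi_def)
    moreover have "rr k = p (NN + k')" using Suc by (simp add: rr_def)
    ultimately show ?thesis by simp
  qed
qed

lemma phi_T:
  assumes y: "0 \<le> y" "y < a0"
  shows "phi (rk_map p s y) = O.S (phi y)"
proof (rule O.num_inj)
  fix k
  have "O.num (phi (rk_map p s y)) k = Suc (res (NN + k) y) mod G (NN + k)"
    using T_res[OF y, of "NN + k"] num_phi by simp
  also have "\<dots> = O.num (O.S (phi y)) k" using O.odo_num[OF phi_spc] num_phi R_G by simp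
  finally show "O.num (phi (rk_map p s y)) k = O.num (O.S (phi y)) k" .
qed

lemma T_A: "0 \<le> y \<Longrightarrow> y < a0 \<Longrightarrow> 0 \<le> rk_map p s y \<and> rk_map p s y < a0"
  using T_res[of y NN] by simp

lemma phi_B:
  assumes y: "0 \<le> y" "y < a0"
  shows "phi y \<in> O.Bset"
proof (rule ccontr)
  assume nB: "phi y \<notin> O.Bset"
  then obtain k1 where k1: "\<forall>k'\<ge>k1. phi y k' = rr k' - 1"
    using phi_spc unfolding O.Bset_def by auto
  obtain m0 where m0: "m0 \<ge> NN" "\<forall>m\<ge>m0. tw m y" using tw_ex y by blast
  define M0 where "M0 = max m0 (NN + k1)"
  define J where "J m = lev m y" for m
  have J1: "M0 \<le> m \<Longrightarrow> J m < H m \<and> y \<in> lv m (J m)" for m using lev m0 J_def M0_def by auto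
  show False
  proof (rule rend_const_False[of M0 J y])
    fix m assume m: "M0 \<le> m"
    show "J m < H m \<and> y \<in> lv m (J m)" using J1 m by blast
    have mNN: "NN \<le> m" using m m0 M0_def by simp
    obtain i where i: "i < p m" "y \<in> lv (Suc m) (off m i + J m)" using level_split J1[OF m] by blast
    have lt: "off m i + J m < H (Suc m)" using off_j_lt i J1[OF m] by blast
    have eq: "J (Suc m) = off m i + J m" using level_unique[OF _ lt _ i(2)] J1[of "Suc m"] m by simp
    have eq2: "J (Suc m) = i * G m + J m" using eq off_G[OF mNN i(1)] by simp
    have "res (Suc m) y = J (Suc m) mod G (Suc m)"
      using R1[of "Suc m" "Suc m"] J1[of "Suc m"] m mNN by simp
    also have "\<dots> = J (Suc m)" using J1[of "Suc m"] m H_le_G[of "Suc m"] by simp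
    finally have rs: "res (Suc m) y = i * G m + J m" using eq2 by simp
    define k' where "k' = Suc m - NN"
    have k': "k' = Suc (m - NN)" "NN + k' = Suc m" "NN + k' - 1 = m" "k1 \<le> k'"
      using mNN m M0_def unfolding k'_def by auto
    have "phi y k' = res (Suc m) y div G m" unfolding phi_def using k' by simp
    also have "\<dots> = i" using rs J1[OF m] H_le_G[of m] by simp
    finally have "i = rr k' - 1" using k1 k' by simp
    then have "i = p m - 1" using k' by (simp add: rr_def)
    then show "rend (Suc m) (J (Suc m)) = rend m (J m)" using eq rend_last J1[OF m] by simp
  qed
qed

lemma W_lim: "(\<lambda>k. W (NN + k)) \<longlonglongrightarrow> 0"
proof (rule tendsto_sandwich[of "\<lambda>_. 0" _ _ "\<lambda>k. (1/2::real)^k"])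
  show "\<forall>\<^sub>F n in sequentially. 0 \<le> W (NN + n)" using W_pos by (simp add: less_imp_le)
  show "\<forall>\<^sub>F n in sequentially. W (NN + n) \<le> (1/2) ^ n"
  proof (intro always_eventually allI)
    fix n
    have "W (NN + n) \<le> (1/2)^(NN + n)" by (rule W_le)
    also have "\<dots> \<le> (1/2)^n" by (intro power_decreasing) auto
    finally show "W (NN + n) \<le> (1/2) ^ n" .
  qed
  show "(\<lambda>k. (1/2::real)^k) \<longlonglongrightarrow> 0" by (rule LIMSEQ_power_zero) simp
qed simp

definition lft :: "nat \<Rightarrow> (nat \<Rightarrow> nat) \<Rightarrow> real" where
  "lft k z = (if O.num z k < H (NN + k) then real (code (NN + k) ! O.num z k) * W (NN + k) else 0)"

definition psi :: "(nat \<Rightarrow> nat) \<Rightarrow> real" where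
  "psi z = lim (\<lambda>k. lft k z)"

lemma lvl_lft: "O.num z k < H (NN + k) \<Longrightarrow> y \<in> lv (NN + k) (O.num z k) \<longleftrightarrow> lft k z \<le> y \<and> y < lft k z + W (NN + k)"
  using in_level unfolding lft_def by simp

lemma psi_phi:
  assumes y: "0 \<le> y" "y < a0"
  shows "psi (phi y) = y"
proof -
  obtain m0 where m0: "m0 \<ge> NN" "\<forall>m\<ge>m0. tw m y" using tw_ex y by blast
  have ev: "lft k (phi y) \<le> y \<and> y < lft k (phi y) + W (NN + k)" if k: "m0 \<le> NN + k" for k
  proof -
    define J where "J = lev (NN + k) y"
    have J: "J < H (NN + k)" "y \<in> lv (NN + k) J" using lev m0 k J_def by auto
    have "O.num (phi y) k = J mod G (NN + k)" using num_phi R1[OF _ _ J] by simp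
    also have "\<dots> = J" using J H_le_G[of "NN + k"] by simp
    finally have nJ: "O.num (phi y) k = J" .
    show ?thesis using lvl_lft[of "phi y" k y] nJ J by simp
  qed
  have "(\<lambda>k. lft k (phi y)) \<longlonglongrightarrow> y"
  proof (rule tendsto_sandwich[of "\<lambda>k. y - W (NN + k)" _ _ "\<lambda>_. y"])
    show "\<forall>\<^sub>F n in sequentially. y - W (NN + n) \<le> lft n (phi y)"
    proof (rule eventually_sequentiallyI[of m0])
      fix n assume "m0 \<le> n"
      then have "m0 \<le> NN + n" by simp
      then show "y - W (NN + n) \<le> lft n (phi y)" using ev[of n] by linarith
    qed
    show "\<forall>\<^sub>F n in sequentially. lft n (phi y) \<le> y"
    proof (rule eventually_sequentiallyI[of m0])
      fix n assume "m0 \<le> n"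
      then have "m0 \<le> NN + n" by simp
      then show "lft n (phi y) \<le> y" using ev[of n] by linarith
    qed
    show "(\<lambda>k. y - W (NN + k)) \<longlonglongrightarrow> y" using tendsto_diff[OF tendsto_const W_lim] by simp
  qed simp
  then show ?thesis unfolding psi_def by (rule limI)
qed

lemma nxt:
  assumes z: "z \<in> O.spc" and k: "O.num z k < H (NN + k)"
  shows "O.num z (Suc k) < H (NN + Suc k) \<and>
         code (NN + Suc k) ! O.num z (Suc k) = code (NN + k) ! O.num z k * p (NN + k) + z (Suc k)"
proof -
  have zk: "z (Suc k) < p (NN + k)" using z by (rule spc_lt)
  have e: "O.num z (Suc k) = off (NN + k) (z (Suc k)) + O.num z k"
    using off_G[of "NN + k" "z (Suc k)"] zk by (simp add: R_G)
  have "Suc (NN + k) = NN + Suc k" by simp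
  then show ?thesis unfolding e using off_j_lt[OF zk k] code_nth[OF zk k] by metis
qed

lemma lft_Suc:
  assumes z: "z \<in> O.spc" and k: "O.num z k < H (NN + k)"
  shows "lft (Suc k) z = lft k z + real (z (Suc k)) * W (NN + Suc k)"
proof -
  have P: "real (p (NN + k)) \<noteq> 0" using p_pos[of "NN + k"] by simp
  have "lft (Suc k) z = real (code (NN + k) ! O.num z k * p (NN + k) + z (Suc k)) * (W (NN + k) / p (NN + k))"
    using nxt[OF z k] unfolding lft_def by (simp add: W_Suc)
  also have "\<dots> = lft k z + real (z (Suc k)) * W (NN + Suc k)"
    using k P unfolding lft_def by (simp add: W_Suc field_simps)
  finally show ?thesis .
qed

lemma in_from:
  assumes z: "z \<in> O.spc" and k0: "O.num z k0 < H (NN + k0)"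
  shows "k0 \<le> k \<Longrightarrow> O.num z k < H (NN + k)"
proof (induction k rule: dec_induct)
  case base then show ?case using k0 .
next
  case (step k) then show ?case using nxt[OF z] by blast
qed

lemma k0_ex:
  assumes z: "z \<in> O.Bset"
  shows "\<exists>k0. O.num z k0 < H (NN + k0)"
proof -
  have zs: "z \<in> O.spc" using z by (simp add: O.Bset_def)
  obtain k'' where k'': "k'' \<ge> 1" "z k'' \<noteq> rr k'' - 1" using z unfolding O.Bset_def by blast
  then obtain k where kk: "k'' = Suc k" by (cases k'') auto
  have zk: "z (Suc k) < p (NN + k)" using zs by (rule spc_lt)
  then have zk2: "z (Suc k) + 2 \<le> p (NN + k)" using k'' kk rr_Suc by simp
  have nl: "O.num z k < G (NN + k)" using O.num_lt[OF zs, of k] by (simp add: R_G)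
  have "O.num z (Suc k) = O.num z k + z (Suc k) * G (NN + k)" by (simp add: R_G)
  also have "\<dots> < (z (Suc k) + 1) * G (NN + k)" using nl by simp
  also have "\<dots> \<le> (p (NN + k) - 1) * G (NN + k)" using zk2 by (intro mult_right_mono) auto
  also have "\<dots> \<le> H (Suc (NN + k))" using H_Suc_G[of "NN + k"] by simp
  finally show ?thesis by (intro exI[of _ "Suc k"]) simp
qed

lemma lft_props:
  assumes z: "z \<in> O.spc" and k0: "O.num z k0 < H (NN + k0)" and kk: "k0 \<le> k" "k \<le> k'"
  shows "lft k z \<le> lft k' z \<and> lft k' z + W (NN + k') \<le> lft k z + W (NN + k)"
  using kk(2)
proof (induction k' rule: dec_induct)
  case base then show ?case by simp
next
  case (step k')
  have in': "O.num z k' < H (NN + k')" using in_from[OF z k0] kk step by simp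
  have zk: "z (Suc k') < p (NN + k')" using z by (rule spc_lt)
  have P: "0 < real (p (NN + k'))" using p_pos by simp
  have Ws: "W (NN + Suc k') = W (NN + k') / real (p (NN + k'))" by (simp add: W_Suc)
  have s1: "lft (Suc k') z = lft k' z + real (z (Suc k')) * W (NN + Suc k')" using lft_Suc[OF z in'] .
  have "real (z (Suc k')) + 1 \<le> real (p (NN + k'))" using zk by linarith
  then have "(real (z (Suc k')) + 1) * W (NN + Suc k') \<le> real (p (NN + k')) * W (NN + Suc k')"
    using W_pos by (intro mult_right_mono) (auto simp: less_imp_le)
  also have "\<dots> = W (NN + k')" using P Ws by simp
  finally have s2: "lft (Suc k') z + W (NN + Suc k') \<le> lft k' z + W (NN + k')"
    using s1 by (simp add: algebra_simps)
  have "0 \<le> real (z (Suc k')) * W (NN + Suc k')" using W_pos by (simp add: less_imp_le)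
  then show ?case using step s1 s2 by linarith
qed

lemma lft_strict:
  assumes z: "z \<in> O.spc" and k: "O.num z k < H (NN + k)" and nm: "z (Suc k) \<noteq> rr (Suc k) - 1"
  shows "lft (Suc k) z + W (NN + Suc k) + W (NN + Suc k) \<le> lft k z + W (NN + k)"
proof -
  have zk: "z (Suc k) < p (NN + k)" using z by (rule spc_lt)
  then have "z (Suc k) + 2 \<le> p (NN + k)" using nm rr_Suc by simp
  then have "real (z (Suc k)) + 2 \<le> real (p (NN + k))" by linarith
  then have "(real (z (Suc k)) + 2) * W (NN + Suc k) \<le> real (p (NN + k)) * W (NN + Suc k)"
    using W_pos by (intro mult_right_mono) (auto simp: less_imp_le)
  also have "\<dots> = W (NN + k)" using p_pos[of "NN + k"] by (simp add: W_Suc)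
  finally show ?thesis using lft_Suc[OF z k] by (simp add: algebra_simps)
qed

lemma phi_psi:
  assumes zB: "z \<in> O.Bset"
  shows "0 \<le> psi z \<and> psi z < a0 \<and> phi (psi z) = z"
proof -
  have z: "z \<in> O.spc" using zB by (simp add: O.Bset_def)
  obtain k0 where k0: "O.num z k0 < H (NN + k0)" using k0_ex[OF zB] by blast
  define f where "f j = lft (j + k0) z" for j
  have inc: "incseq f"
  proof (rule incseq_SucI)
    fix j show "f j \<le> f (Suc j)" unfolding f_def
      using lft_props[OF z k0, of "j + k0" "Suc (j + k0)"] by simp
  qed
  have bdd: "bdd_above (range f)"
  proof
    fix v assume "v \<in> range f"
    then obtain j where "v = f j" by blast
    then show "v \<le> lft k0 z + W (NN + k0)" unfolding f_def
      using lft_props[OF z k0, of k0 "j + k0"] W_pos[of "NN + (j + k0)"] by simp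
  qed
  define L where "L = (SUP j. f j)"
  have fL: "f \<longlonglongrightarrow> L" unfolding L_def using LIMSEQ_incseq_SUP[OF bdd inc] .
  have lL: "(\<lambda>k. lft k z) \<longlonglongrightarrow> L" using LIMSEQ_offset[of "\<lambda>k. lft k z" k0] fL unfolding f_def by simp
  have psiL: "psi z = L" unfolding psi_def using lL by (rule limI)
  have inL: "L \<in> lv (NN + k) (O.num z k)" if k: "k0 \<le> k" for k
  proof -
    have nk: "O.num z k < H (NN + k)" using in_from[OF z k0 k] .
    have "\<forall>n\<ge>k. lft k z \<le> lft n z" using lft_props[OF z k0 k] by blast
    then have low: "lft k z \<le> L" using LIMSEQ_le_const[OF lL] by blast
    obtain k'' where k'': "k'' \<ge> Suc k" "z k'' \<noteq> rr k'' - 1" using zB unfolding O.Bset_def by blast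
    then obtain k' where kk: "k'' = Suc k'" "k \<le> k'" by (cases k'') auto
    have nk': "O.num z k' < H (NN + k')" using in_from[OF z k0] k kk by simp
    have st: "lft (Suc k') z + W (NN + Suc k') + W (NN + Suc k') \<le> lft k' z + W (NN + k')"
      using lft_strict[OF z nk'] k'' kk by simp
    have p1: "lft k' z + W (NN + k') \<le> lft k z + W (NN + k)" using lft_props[OF z k0 k kk(2)] by simp
    have up: "L \<le> lft k z + W (NN + k) - W (NN + Suc k')"
    proof (rule LIMSEQ_le_const2[OF lL])
      show "\<exists>N. \<forall>n\<ge>N. lft n z \<le> lft k z + W (NN + k) - W (NN + Suc k')"
      proof (intro exI allI impI)
        fix n assume n: "Suc k' \<le> n"
        have "lft n z + W (NN + n) \<le> lft (Suc k') z + W (NN + Suc k')"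
          using lft_props[OF z k0 _ n] k kk by simp
        then show "lft n z \<le> lft k z + W (NN + k) - W (NN + Suc k')"
          using st p1 W_pos[of "NN + n"] by linarith
      qed
    qed
    then have "L < lft k z + W (NN + k)" using W_pos[of "NN + Suc k'"] by linarith
    then show ?thesis using lvl_lft[OF nk] low by simp
  qed
  have L_in: "L \<in> lv (NN + k0) (O.num z k0)" using inL by simp
  have tL: "tw (NN + k0) L" using tw_level[OF k0 L_in] .
  have resL: "res (NN + k) L = O.num z k" for k
  proof (cases "k0 \<le> k")
    case True
    have "res (NN + k) L = O.num z k mod G (NN + k)"
      using R1[of "NN + k" "NN + k"] in_from[OF z k0 True] inL[OF True] by simp
    also have "\<dots> = O.num z k" using in_from[OF z k0 True] H_le_G[of "NN + k"] by simp
    finally show ?thesis .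
  next
    case False
    have "res (NN + k) L = O.num z k0 mod G (NN + k)"
      using R1[of "NN + k" "NN + k0"] k0 L_in False by simp
    also have "\<dots> = O.num z k" using O.num_mod[OF z, of k k0] False R_G by simp
    finally show ?thesis .
  qed
  have "phi L = z" by (rule O.num_inj) (simp add: num_phi resL)
  then show ?thesis using tw_a0[OF tL] psiL by simp
qed

end

context rk2 begin

abbreviation "MM \<equiv> rk_measure p s"

lemma MM_eq: "MM = uniform_measure lborel {0..<a0}"
  by (simp add: rk_measure_def Sp_eq)

lemma lb_a0: "emeasure lborel {0..<a0} = ennreal a0"
  using a0_pos by simp

lemma prob_MM: "prob_space MM"
  unfolding MM_eq using lb_a0 a0_pos by (intro prob_space_uniform_measure) auto

lemma sets_MM: "sets MM = sets borel" by (simp add: MM_eq)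
lemma space_MM: "space MM = UNIV" by (simp add: MM_eq)

lemma level_borel: "lv n j \<in> sets borel" unfolding rk_level_def by simp

lemma level_sub: "j < H n \<Longrightarrow> lv n j \<subseteq> {0..<a0}"
  using tw_level tw_a0 by fastforce

lemma emeasure_level: "j < H n \<Longrightarrow> emeasure MM (lv n j) = ennreal (W n / a0)"
proof -
  assume j: "j < H n"
  have "emeasure MM (lv n j) = emeasure lborel ({0..<a0} \<inter> lv n j) / emeasure lborel {0..<a0}"
    unfolding MM_eq by (intro emeasure_uniform_measure) (simp_all add: level_borel)
  also have "{0..<a0} \<inter> lv n j = lv n j" using level_sub[OF j] by blast
  also have "emeasure lborel (lv n j) = ennreal (W n)"
    using level_eq[OF j] W_pos[of n] by simp
  finally show ?thesis using lb_a0 a0_pos W_pos[of n] by (simp add: divide_ennreal)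
qed

lemma measure_level: "j < H n \<Longrightarrow> measure MM (lv n j) = W n / a0"
proof -
  interpret P: prob_space MM by (rule prob_MM)
  assume j: "j < H n"
  show ?thesis using emeasure_level[OF j] a0_pos W_pos[of n] by (simp add: P.emeasure_eq_measure)
qed

definition Bs :: "nat \<Rightarrow> nat \<Rightarrow> nat \<Rightarrow> nat \<Rightarrow> real set" where
  "Bs m \<rho> m' J = (if m \<le> m' \<and> J < H m' \<and> J mod G m = \<rho> then lv m' J else {})"

definition Z :: "nat \<Rightarrow> real set" where
  "Z \<rho> = (if \<rho> = 0 then - {0..<a0} else {})"

lemma res_set:
  assumes m: "NN \<le> m"
  shows "{y. res m y = \<rho>} = Z \<rho> \<union> (\<Union>m'. \<Union>J. Bs m \<rho> m' J)"
proof (intro set_eqI iffI)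
  fix y assume "y \<in> {y. res m y = \<rho>}"
  then have r: "res m y = \<rho>" by simp
  show "y \<in> Z \<rho> \<union> (\<Union>m'. \<Union>J. Bs m \<rho> m' J)"
  proof (cases "0 \<le> y \<and> y < a0")
    case True
    then obtain m0 where m0: "\<forall>m\<ge>m0. tw m y" using tw_ex by blast
    define m'' where "m'' = stg m y"
    have m1: "m \<le> m'' \<and> tw m'' y" unfolding m''_def stg_def
      using m0 by (intro LeastI[where P="\<lambda>m'. m \<le> m' \<and> tw m' y" and k="max m m0"]) auto
    define J where "J = lev m'' y"
    have J: "J < H m''" "y \<in> lv m'' J" using lev m1 J_def by auto
    have "res m y = J mod G m" unfolding res_def using True J_def m''_def by simp
    then have "y \<in> Bs m \<rho> m'' J" unfolding Bs_def using J m1 r by simp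
    then show ?thesis by blast
  next
    case False
    then have "res m y = 0" unfolding res_def by (simp only: if_not_P if_False)
    then have "y \<in> Z \<rho>" unfolding Z_def using r False by simp
    then show ?thesis by (rule UnI1)
  qed
next
  fix y assume y: "y \<in> Z \<rho> \<union> (\<Union>m'. \<Union>J. Bs m \<rho> m' J)"
  show "y \<in> {y. res m y = \<rho>}"
  proof (cases "y \<in> Z \<rho>")
    case False
    then obtain m' J where "y \<in> Bs m \<rho> m' J" using y by blast
    then have "m \<le> m'" "J < H m'" "J mod G m = \<rho>" "y \<in> lv m' J"
      unfolding Bs_def by (simp_all split: if_splits)
    then show ?thesis using R1[OF m] by simp
  next
    case True
    then have "\<rho> = 0" "\<not> (0 \<le> y \<and> y < a0)" unfolding Z_def by (simp_all split: if_splits)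
    then have "res m y = 0" unfolding res_def by (simp only: if_not_P if_False)
    then show ?thesis using \<open>\<rho> = 0\<close> by simp
  qed
qed

lemma res_borel_set: "NN \<le> m \<Longrightarrow> {y. res m y = \<rho>} \<in> sets borel"
proof -
  assume m: "NN \<le> m"
  have B: "Bs m \<rho> m' J \<in> sets borel" for m' J unfolding Bs_def by (simp add: level_borel)
  have "(\<Union>J. Bs m \<rho> m' J) \<in> sets borel" for m'
    using B by (intro sets.countable_nat_UN) blast
  then have "(\<Union>m'. \<Union>J. Bs m \<rho> m' J) \<in> sets borel"
    by (intro sets.countable_nat_UN) blast
  moreover have "Z \<rho> \<in> sets (borel :: real measure)" unfolding Z_def by simp
  ultimately show ?thesis unfolding res_set[OF m] by (intro sets.Un)
qed

lemma res_meas: "NN \<le> m \<Longrightarrow> (\<lambda>y. res m y) \<in> measurable MM (count_space UNIV)"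
  using res_borel_set by (auto simp: measurable_count_space_eq2_countable space_MM sets_MM vimage_def)

lemma res_lower:
  assumes m: "NN \<le> m" "m \<le> m'" and \<rho>: "\<rho> < G m"
  shows "1 / real (G m) - 1 / real (G m') \<le> measure MM {y. res m y = \<rho>}"
proof -
  interpret P: prob_space MM by (rule prob_MM)
  obtain c where c: "G m' = G m * c" using G_dvd[OF m] by (auto elim: dvdE)
  have c1: "1 \<le> c" using c G_pos[of m'] by (cases c) auto
  define J where "J t = \<rho> + t * G m" for t
  have PPm: "PP \<le> G m" using PP_le_H[OF m(1)] H_le_G[of m] by simp
  have Glt: "G m' < H m' + PP" using G_lt m by simp
  have JH: "J t < H m'" if t: "t < c - 1" for t
  proof -
    have "J t < G m + t * G m" using \<rho> unfolding J_def by simp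
    also have "\<dots> = (t + 1) * G m" by simp
    also have "\<dots> \<le> (c - 1) * G m" using t by (intro mult_right_mono) auto
    also have "\<dots> = G m' - G m" using c c1 by (simp add: algebra_simps diff_mult_distrib)
    finally show ?thesis using PPm Glt by linarith
  qed
  have Jinj: "t1 < c - 1 \<Longrightarrow> t2 < c - 1 \<Longrightarrow> J t1 = J t2 \<Longrightarrow> t1 = t2" for t1 t2
    unfolding J_def using G_pos[of m] by simp
  define U where "U = (\<Union>t\<in>{..<c - 1}. lv m' (J t))"
  have disj: "disjoint_family_on (\<lambda>t. lv m' (J t)) {..<c - 1}"
    unfolding disjoint_family_on_def
  proof (intro ballI impI)
    fix t1 t2 assume t: "t1 \<in> {..<c - 1}" "t2 \<in> {..<c - 1}" "t1 \<noteq> t2"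
    show "lv m' (J t1) \<inter> lv m' (J t2) = {}"
    proof (rule ccontr)
      assume "lv m' (J t1) \<inter> lv m' (J t2) \<noteq> {}"
      then obtain y where "y \<in> lv m' (J t1)" "y \<in> lv m' (J t2)" by blast
      moreover have "t1 < c - 1" "t2 < c - 1" using t by auto
      ultimately have "J t1 = J t2" using level_unique[OF JH JH] by blast
      then show False using Jinj t by simp
    qed
  qed
  have "measure MM U = (\<Sum>t\<in>{..<c - 1}. measure MM (lv m' (J t)))"
    unfolding U_def using disj by (intro P.finite_measure_finite_Union) (auto simp: sets_MM level_borel)
  also have "\<dots> = (\<Sum>t\<in>{..<c - 1}. W m' / a0)" using measure_level JH by simp
  also have "\<dots> = real (c - 1) * W m' / a0" by simp
  also have "\<dots> = real (c - 1) / real (G m')"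
  proof -
    have "a0 = real (G m') * W m'" using GW[of m'] m by simp
    then show ?thesis using W_pos[of m'] G_pos[of m'] by (simp add: field_simps)
  qed
  also have "\<dots> = 1 / real (G m) - 1 / real (G m')"
    using c c1 G_pos[of m] by (simp add: field_simps of_nat_diff)
  finally have mU: "measure MM U = 1 / real (G m) - 1 / real (G m')" .
  have "U \<subseteq> {y. res m y = \<rho>}"
  proof
    fix y assume "y \<in> U"
    then obtain t where t: "t < c - 1" "y \<in> lv m' (J t)" unfolding U_def by blast
    have "res m y = J t mod G m" using R1[OF m JH[OF t(1)] t(2)] .
    also have "\<dots> = \<rho>" unfolding J_def using \<rho> by simp
    finally show "y \<in> {y. res m y = \<rho>}" by simp
  qed
  then have "measure MM U \<le> measure MM {y. res m y = \<rho>}"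
    using res_borel_set[OF m(1)] by (intro P.finite_measure_mono) (auto simp: sets_MM)
  then show ?thesis using mU by simp
qed

lemma res_ge:
  assumes m: "NN \<le> m" and \<rho>: "\<rho> < G m"
  shows "1 / real (G m) \<le> measure MM {y. res m y = \<rho>}"
proof (rule ccontr)
  assume "\<not> ?thesis"
  then have e: "0 < 1 / real (G m) - measure MM {y. res m y = \<rho>}" by simp
  obtain n :: nat where n: "1 / (1 / real (G m) - measure MM {y. res m y = \<rho>}) < real n"
    using reals_Archimedean2 by blast
  define m' where "m' = max m n"
  have "real n \<le> real (G m')" using H_gt[of m'] H_le_G[of m'] m'_def by simp
  then have "1 / (1 / real (G m) - measure MM {y. res m y = \<rho>}) < real (G m')" using n by simp
  then have "1 / real (G m') < 1 / real (G m) - measure MM {y. res m y = \<rho>}"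
    using e G_pos[of m'] by (simp add: field_simps)
  then show False using res_lower[OF m _ \<rho>, of m'] m'_def by simp
qed

lemma res_measure:
  assumes m: "NN \<le> m" and \<rho>: "\<rho> < G m"
  shows "measure MM {y. res m y = \<rho>} = 1 / real (G m)"
proof -
  interpret P: prob_space MM by (rule prob_MM)
  have disj: "disjoint_family_on (\<lambda>\<rho>. {y. res m y = \<rho>}) {..<G m}"
    by (auto simp: disjoint_family_on_def)
  have "(\<Sum>\<rho>\<in>{..<G m}. measure MM {y. res m y = \<rho>}) = measure MM (\<Union>\<rho>\<in>{..<G m}. {y. res m y = \<rho>})"
    using disj res_borel_set[OF m] by (intro P.finite_measure_finite_Union[symmetric]) (auto simp: sets_MM)
  also have "(\<Union>\<rho>\<in>{..<G m}. {y. res m y = \<rho>}) = space MM" using res_lt[of m] by (auto simp: space_MM)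
  also have "measure MM (space MM) = 1" by (rule P.prob_space)
  finally have sum1: "(\<Sum>\<rho>\<in>{..<G m}. measure MM {y. res m y = \<rho>}) = 1" .
  show ?thesis
  proof (rule ccontr)
    assume ne: "\<not> ?thesis"
    have "(\<Sum>\<rho>'\<in>{..<G m}. 1 / real (G m)) < (\<Sum>\<rho>'\<in>{..<G m}. measure MM {y. res m y = \<rho>'})"
    proof (rule sum_strict_mono_ex1)
      show "finite {..<G m}" by simp
      show "\<forall>x\<in>{..<G m}. 1 / real (G m) \<le> measure MM {y. res m y = x}" using res_ge[OF m] by simp
      show "\<exists>a\<in>{..<G m}. 1 / real (G m) < measure MM {y. res m y = a}"
        using ne res_ge[OF m \<rho>] \<rho> by (intro bexI[of _ \<rho>]) auto
    qed
    then show False using sum1 G_pos[of m] by simp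
  qed
qed

end

context rk2 begin

lemma phi_comp: "(\<lambda>y. phi y k) \<in> measurable MM (count_space UNIV)"
proof -
  have e: "(\<lambda>y. phi y k) = (\<lambda>n. if k = 0 then n else n div G (NN + k - 1)) \<circ> res (NN + k)"
    by (auto simp: phi_def)
  show ?thesis unfolding e
    by (rule measurable_comp[OF res_meas]) simp_all
qed

lemma phi_ML: "(\<lambda>y. phi y k) \<in> measurable MM (O.ML k)"
proof -
  have "(\<lambda>y. phi y k) \<in> measurable MM (count_space {0..<rr k})"
  proof (subst measurable_count_space_eq2_countable, intro conjI ballI)
    show "(\<lambda>y. phi y k) \<in> space MM \<rightarrow> {0..<rr k}" using phi_spc by (auto simp: O.spc_def)
    fix a
    show "(\<lambda>y. phi y k) -` {a} \<inter> space MM \<in> sets MM"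
      using phi_comp[of k] by (simp add: measurable_count_space_eq2_countable)
  qed
  then show ?thesis
    by (subst measurable_cong_sets[OF refl sets_uniform_count_measure_count_space])
qed

lemma phi_meas: "phi \<in> measurable MM O.NM"
proof -
  have "(\<lambda>y k. phi y k) \<in> measurable MM (Pi\<^sub>M UNIV O.ML)"
  proof (rule measurable_PiM_single')
    fix k show "(\<lambda>y. phi y k) \<in> measurable MM (O.ML k)" by (rule phi_ML)
  next
    show "(\<lambda>y k. phi y k) \<in> space MM \<rightarrow> (\<Pi>\<^sub>E k\<in>UNIV. space (O.ML k))"
      using phi_spc by (auto simp: O.spc_def space_uniform_count_measure)
  qed
  then show ?thesis using O.NM_def' by simp
qed

lemma distr_phi: "distr MM O.NM phi = O.NM"
proof (rule O.odo_eqI)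
  show "sets (distr MM O.NM phi) = sets O.NM" by simp
  have "prob_space (distr MM O.NM phi)" by (rule prob_space.prob_space_distr[OF prob_MM phi_meas])
  then show "finite_measure (distr MM O.NM phi)" unfolding prob_space_def by blast
  fix k \<rho> assume \<rho>: "\<rho> < O.R k"
  interpret P: prob_space MM by (rule prob_MM)
  have "emeasure (distr MM O.NM phi) (O.C k \<rho>) = emeasure MM (phi -` O.C k \<rho> \<inter> space MM)"
    by (rule emeasure_distr[OF phi_meas O.C_sets])
  also have "phi -` O.C k \<rho> \<inter> space MM = {y. res (NN + k) y = \<rho>}"
    using phi_spc by (auto simp: O.C_def num_phi space_MM)
  also have "emeasure MM {y. res (NN + k) y = \<rho>} = ennreal (1 / real (G (NN + k)))"
    using res_measure[of "NN + k" \<rho>] \<rho> R_G by (simp add: P.emeasure_eq_measure)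
  finally show "emeasure (distr MM O.NM phi) (O.C k \<rho>) = ennreal (1 / real (O.R k))"
    using R_G by simp
qed

lemma psi_meas: "psi \<in> measurable O.NM MM"
proof -
  have l: "(\<lambda>z. lft k z) \<in> borel_measurable O.NM" for k
  proof -
    have e: "(\<lambda>z. lft k z) = (\<lambda>n. if n < H (NN + k) then real (code (NN + k) ! n) * W (NN + k) else 0) \<circ> (\<lambda>z. O.num z k)"
      by (auto simp: lft_def)
    show ?thesis unfolding e by (rule measurable_comp[OF O.num_meas]) simp
  qed
  have "(\<lambda>z. lim (\<lambda>k. lft k z)) \<in> borel_measurable O.NM"
    by (rule borel_measurable_lim_metric) (rule l)
  then have "psi \<in> borel_measurable O.NM" unfolding psi_def[abs_def] .
  then show ?thesis by (subst measurable_cong_sets[OF refl sets_MM])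
qed

lemma iso: "mp_isomorphic MM (rk_map p s) O.NM O.S"
  unfolding mp_isomorphic_def
proof (intro exI conjI ballI)
  show "{0..<a0} \<in> sets MM" by (simp add: sets_MM)
  show "O.Bset \<in> sets O.NM" by (rule O.B_sets)
  have "emeasure MM (UNIV - {0..<a0}) = emeasure lborel ({0..<a0} \<inter> (UNIV - {0..<a0})) / emeasure lborel {0..<a0}"
    unfolding MM_eq by (intro emeasure_uniform_measure) auto
  then show "emeasure MM (space MM - {0..<a0}) = 0" by (simp add: space_MM)
  show "emeasure O.NM (space O.NM - O.Bset) = 0" by (rule O.B_null)
  show "phi \<in> measurable MM O.NM" by (rule phi_meas)
  show "psi \<in> measurable O.NM MM" by (rule psi_meas)
  show "distr MM O.NM phi = O.NM" by (rule distr_phi)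
  fix y assume y: "y \<in> {0..<a0}"
  then show "rk_map p s y \<in> {0..<a0}" using T_A by auto
  show "phi y \<in> O.Bset" using phi_B y by auto
  show "psi (phi y) = y" using psi_phi y by auto
  show "phi (rk_map p s y) = O.S (phi y)" using phi_T y by auto
next
  fix z assume z: "z \<in> O.Bset"
  show "O.S z \<in> O.Bset" using O.odo_B z by blast
  show "psi z \<in> {0..<a0}" using phi_psi z by auto
  show "phi (psi z) = z" using phi_psi z by auto
qed

definition ev :: "nat \<Rightarrow> complex" where "ev k = cis (2 * pi / real (G (NN + k)))"

lemma G_ge2: "2 \<le> G (NN + k)"
  using H_NN H_mono[of NN "NN + k"] H_le_G[of "NN + k"] by simp

lemma ev_pow: "ev k ^ G (NN + k) = 1"
  unfolding ev_def Complex.DeMoivre using G_ge2[of k] by simp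

lemma eig: "mp_eigenvalue MM (rk_map p s) (ev k)"
  unfolding mp_eigenvalue_def
proof (intro exI conjI)
  define g where "g = G (NN + k)"
  have g2: "2 \<le> g" unfolding g_def by (rule G_ge2)
  let ?f = "\<lambda>y. cis (2 * pi * real (res (NN + k) y) / real g)"
  have e: "?f = (\<lambda>n. cis (2 * pi * real n / real g)) \<circ> res (NN + k)" by auto
  show "?f \<in> borel_measurable MM" unfolding e by (rule measurable_comp[OF res_meas]) simp_all
  have key: "?f (rk_map p s y) = ev k * ?f y" if y: "0 \<le> y" "y < a0" for y
  proof -
    define r where "r = res (NN + k) y"
    have r: "r < g" unfolding r_def g_def by (rule res_lt)
    have T: "res (NN + k) (rk_map p s y) = Suc r mod g"
      using T_res[OF y, of "NN + k"] r_def g_def by simp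
    have "ev k * ?f y = cis (2 * pi / real g + 2 * pi * real r / real g)"
      unfolding ev_def g_def[symmetric] r_def[symmetric] by (simp add: cis_mult)
    also have "2 * pi / real g + 2 * pi * real r / real g = 2 * pi * real (Suc r) / real g"
      using g2 by (simp add: field_simps)
    finally have A: "ev k * ?f y = cis (2 * pi * real (Suc r) / real g)" .
    show ?thesis
    proof (cases "Suc r < g")
      case True then show ?thesis using A T by simp
    next
      case False
      then have "Suc r = g" using r by simp
      then show ?thesis using A T g2 by simp
    qed
  qed
  show "AE y in MM. ?f (rk_map p s y) = ev k * ?f y"
    unfolding MM_eq by (intro AE_uniform_measureI AE_I2) (auto simp: key)
  show "\<not> (AE y in MM. ?f y = 0)"
  proof
    interpret P: prob_space MM by (rule prob_MM)
    assume "AE y in MM. ?f y = 0"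
    then have "AE y in MM. False" by (rule AE_mp) simp
    then show False by simp
  qed
qed

lemma G_smono: "strict_mono (\<lambda>k. G (NN + k))"
proof (rule strict_monoI_Suc)
  fix k
  have "G (NN + Suc k) = p (NN + k) * G (NN + k)" using G_Suc[of "NN + k"] by simp
  also have "\<dots> > G (NN + k)" using p2[of "NN + k"] G_pos[of "NN + k"] by simp
  finally show "G (NN + k) < G (NN + Suc k)" .
qed

lemma ev_inj: "inj ev"
proof (rule injI)
  fix k l assume "ev k = ev l"
  then have "Re (ev k) = Re (ev l)" by simp
  then have c: "cos (2 * pi / real (G (NN + k))) = cos (2 * pi / real (G (NN + l)))" by (simp add: ev_def)
  have b: "0 \<le> 2 * pi / real (G (NN + j)) \<and> 2 * pi / real (G (NN + j)) \<le> pi" for j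
  proof -
    have "2 \<le> real (G (NN + j))" using G_ge2[of j] by linarith
    then show ?thesis by (simp add: field_simps)
  qed
  have "2 * pi / real (G (NN + k)) = 2 * pi / real (G (NN + l))"
    using cos_inj_pi[OF _ _ _ _ c] b by blast
  then have "real (G (NN + k)) = real (G (NN + l))" using G_pos[of "NN + k"] G_pos[of "NN + l"] by (simp add: field_simps)
  then have "G (NN + k) = G (NN + l)" by simp
  then show "k = l" using strict_mono_eq[OF G_smono] by blast
qed

lemma eig_infinite:
  "infinite {c::complex. (\<exists>k>0. c ^ k = 1) \<and> mp_eigenvalue (rk_measure p s) (rk_map p s) c}"
proof -
  have "range ev \<subseteq> {c::complex. (\<exists>k>0. c ^ k = 1) \<and> mp_eigenvalue (rk_measure p s) (rk_map p s) c}"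
    using ev_pow eig G_pos by fastforce
  moreover have "infinite (range ev)" using range_inj_infinite[OF ev_inj] .
  ultimately show ?thesis using infinite_super by blast
qed

end

theorem mainTheorem8:
  fixes p :: "nat \<Rightarrow> nat" and s :: "nat \<Rightarrow> nat \<Rightarrow> nat"
  assumes "\<forall>n. p n \<ge> 2"
    and "summable (\<lambda>n. real (\<Sum>i<p n. s n i) / real (rk_height p s (Suc n)))"
    and "periodic_word (rk_word p s)"
  shows "(\<exists>r. (\<forall>n. r n \<ge> 2) \<and>
            mp_isomorphic (rk_measure p s) (rk_map p s) (odometer_measure r) (odometer_map r))
         \<and> infinite {c::complex. (\<exists>k>0. c ^ k = 1) \<and> mp_eigenvalue (rk_measure p s) (rk_map p s) c}"
proof -
  interpret rk2 p s
    using assms(1,3) by unfold_locales auto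
  show ?thesis using rr2 iso eig_infinite by blast
qed

end
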